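(* Consider a branching random walk as below and let $R$ be the supremum of the positions of all individuals of all generations (including the initial individual at $0$). Suppose either that the underlying Galton–Watson process becomes extinct a.s., or that it is supercritical with $\gamma<0$. Then $0\le R<\infty$ a.s. and the law of $R$ solves the recursive distributional equation $$R\stackrel d=\max\Big(0,\max_{i\le^* N}(R_i+\xi_i)\Big),\qquad 0\le R<\infty,$$ where $R_1,R_2,\dots$ are i.i.d. copies of $R$ independent of $(N;\xi_i)$ and the inner max over an empty set is omitted. If extinction is certain, the law of $R$ is the unique solution of this equation and the associated invariant RTP is endogenous. In the supercritical case, the law of $R$ is the weak limit of $T^n(\delta_0)$ (with $T$ the map induced by the equation), it is stochastically smaller than every solution, and the associated invariant RTP is endogenous.
   Context: Branching random walk (BRW) on $\mathbb R$: generation $0$ consists of one individual at position $0$. Each individual at position $x$ has a random number $N\in\{0,1,2,\dots,\infty\}$ of children, at positions $x+\xi_i$, $i\le^*N$, where $\infty>\xi_1\ge\xi_2\ge\cdots$; the families $(N;\xi_i)$ are i.i.d. over individuals with an arbitrary joint law satisfying the moment condition: there is $\theta>0$ with $m(\theta):=\mathbb E[\sum_i e^{\theta\xi_i}]<\infty$. Here $i\le^*N$ means $i\le N$ if $N<\infty$ and $i<\infty$ if $N=\infty$. $R_n$ denotes the position of the rightmost individual in generation $n$ ($-\infty$ if none). It is known that if the BRW is supercritical ($\mathbb E N>1$) there is a constant $\gamma\in(-\infty,\infty)$ with $n^{-1}R_n\to\gamma$ a.s. on nonextinction. The map $T$ sends a law $\mu$ on $[0,\infty)$ to the law of $\max(0,\max_{i\le^*N}(X_i+\xi_i))$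 with $X_i$ i.i.d. $\mu$ independent of $(N;\xi_i)$. Invariant recursive tree process (RTP) with marginal $\mu$: indexing individuals of the family tree by finite words $\mathbf i$ of positive integers with i.i.d. data $(N_{\mathbf i};\xi_{\mathbf ij})$, a family $(X_{\mathbf i})$ with each $X_{\mathbf i}\sim\mu$, $X_{\mathbf i}=\max(0,\max_{j\le^*N_{\mathbf i}}(X_{\mathbf ij}+\xi_{\mathbf ij}))$ a.s., and the generation-$d$ variables i.i.d. and independent of the data at generations $<d$; it is endogenous if $X_\emptyset$ is measurable with respect to the $\sigma$-field of all data $(N_{\mathbf i};\xi_{\mathbf ij})$. *)

theory Defs
  imports "HOL-Probability.Probability"
begin

text \<open>A family (the offspring data of one individual) is a pair (N, xi):
  N :: enat is the number of children (possibly infinite), and xi :: nat => real gives the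
  displacements; child j (0-indexed) exists iff enat j < N, so the paper's xi_1, xi_2, ...
  are xi 0, xi 1, ...  Values xi j with enat j >= N are irrelevant.\<close>

type_synonym family = "enat \<times> (nat \<Rightarrow> real)"

definition family_space :: "family measure" where
  "family_space = count_space UNIV \<Otimes>\<^sub>M PiM UNIV (\<lambda>_. borel)"

definition brw_law :: "family measure \<Rightarrow> bool" where
  "brw_law F \<longleftrightarrow> prob_space F \<and> sets F = sets family_space
     \<and> (AE f in F. \<forall>i j. i \<le> j \<longrightarrow> enat j < fst f \<longrightarrow> snd f j \<le> snd f i)
     \<and> (\<exists>\<theta>>0. (\<integral>\<^sup>+ f. (\<Sum>i. if enat i < fst f then ennreal (exp (\<theta> * snd f i)) else 0) \<partial>F) < \<infinity>)"

text \<open>Individuals are finite words of naturals; [i1,...,ik] is child ik of [i1,...,i(k-1)].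
  A sample of the whole BRW is omega :: nat list => family, omega u being the data of u.\<close>

definition brw_space :: "family measure \<Rightarrow> (nat list \<Rightarrow> family) measure" where
  "brw_space F = PiM UNIV (\<lambda>_. F)"

fun alive :: "(nat list \<Rightarrow> family) \<Rightarrow> nat list \<Rightarrow> bool" where
  "alive \<omega> [] = True"
| "alive \<omega> (j # w) = (enat j < fst (\<omega> []) \<and> alive (\<lambda>v. \<omega> (j # v)) w)"

fun pos :: "(nat list \<Rightarrow> family) \<Rightarrow> nat list \<Rightarrow> real" where
  "pos \<omega> [] = 0"
| "pos \<omega> (j # w) = snd (\<omega> []) j + pos (\<lambda>v. \<omega> (j # v)) w"

text \<open>Rightmost position in generation n (-infinity if the generation is empty).\<close>
definition rightmost :: "(nat list \<Rightarrow> family) \<Rightarrow> nat \<Rightarrow> ereal" where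
  "rightmost \<omega> n = (SUP w\<in>{w. alive \<omega> w \<and> length w = n}. ereal (pos \<omega> w))"

definition nonextinct :: "(nat list \<Rightarrow> family) \<Rightarrow> bool" where
  "nonextinct \<omega> \<longleftrightarrow> (\<forall>n. \<exists>w. alive \<omega> w \<and> length w = n)"

definition allmax :: "(nat list \<Rightarrow> family) \<Rightarrow> ereal" where
  "allmax \<omega> = (SUP w\<in>{w. alive \<omega> w}. ereal (pos \<omega> w))"

definition lawR :: "family measure \<Rightarrow> ereal measure" where
  "lawR F = distr (brw_space F) borel allmax"

text \<open>The map T.  Laws are taken on ereal (the sup may a priori be infinite);
  the empty inner max is -infinity, hence omitted by the outer max with 0.\<close>
definition rde_map :: "family \<Rightarrow> (nat \<Rightarrow> ereal) \<Rightarrow> ereal" where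
  "rde_map f X = max 0 (SUP i\<in>{i. enat i < fst f}. X i + ereal (snd f i))"

definition T_op :: "family measure \<Rightarrow> ereal measure \<Rightarrow> ereal measure" where
  "T_op F \<mu> = distr (F \<Otimes>\<^sub>M PiM UNIV (\<lambda>_::nat. \<mu>)) borel (\<lambda>(f, X). rde_map f X)"

definition rde_solution :: "family measure \<Rightarrow> ereal measure \<Rightarrow> bool" where
  "rde_solution F \<mu> \<longleftrightarrow> prob_space \<mu> \<and> sets \<mu> = sets borel
     \<and> emeasure \<mu> {0..<\<infinity>} = 1 \<and> T_op F \<mu> = \<mu>"

definition stoch_le :: "ereal measure \<Rightarrow> ereal measure \<Rightarrow> bool" where
  "stoch_le \<mu> \<nu> \<longleftrightarrow> (\<forall>x. measure \<mu> {x<..} \<le> measure \<nu> {x<..})"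

definition inv_RTP :: "family measure \<Rightarrow> 'o measure \<Rightarrow> (nat list \<Rightarrow> 'o \<Rightarrow> family)
     \<Rightarrow> (nat list \<Rightarrow> 'o \<Rightarrow> ereal) \<Rightarrow> ereal measure \<Rightarrow> bool" where
  "inv_RTP F M data X \<mu> \<longleftrightarrow> prob_space M
     \<and> prob_space.indep_vars M (\<lambda>_. F) data UNIV
     \<and> (\<forall>w. distr M F (data w) = F)
     \<and> (\<forall>w. X w \<in> borel_measurable M \<and> distr M borel (X w) = \<mu>)
     \<and> (\<forall>w. AE \<omega> in M. X w \<omega> = rde_map (data w \<omega>) (\<lambda>j. X (w @ [j]) \<omega>))
     \<and> (\<forall>d::nat. prob_space.indep_vars M (\<lambda>_. borel) X {w. length w = d}
          \<and> prob_space.indep_set M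
              {(\<lambda>\<omega>. restrict (\<lambda>w. X w \<omega>) {w. length w = d}) -` A \<inter> space M
                 | A. A \<in> sets (PiM {w. length w = d} (\<lambda>_. borel))}
              {(\<lambda>\<omega>. restrict (\<lambda>v. data v \<omega>) {v. length v < d}) -` B \<inter> space M
                 | B. B \<in> sets (PiM {v. length v < d} (\<lambda>_. F))})"

definition endogenous :: "family measure \<Rightarrow> 'o measure \<Rightarrow> (nat list \<Rightarrow> 'o \<Rightarrow> family)
     \<Rightarrow> (nat list \<Rightarrow> 'o \<Rightarrow> ereal) \<Rightarrow> bool" where
  "endogenous F M data X \<longleftrightarrow>
     (\<exists>g \<in> measurable (PiM UNIV (\<lambda>_::nat list. F)) borel. AE \<omega> in M. X [] \<omega> = g (\<lambda>w. data w \<omega>))"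

end

theory Submission
  imports Defs
begin


lemma distr_PiM_map:
  fixes M :: "'i \<Rightarrow> 'a measure" and N :: "'i \<Rightarrow> 'b measure"
  assumes M: "\<And>i. prob_space (M i)" and f: "\<And>i. f i \<in> measurable (M i) (N i)"
  shows "distr (PiM UNIV M) (PiM UNIV N) (\<lambda>\<omega> i. f i (\<omega> i)) = PiM UNIV (\<lambda>i. distr (M i) (N i) (f i))"
proof (rule measure_eqI_PiM_infinite[symmetric])
  show "sets (PiM UNIV (\<lambda>i. distr (M i) (N i) (f i))) = sets (PiM UNIV N)"
    by (intro sets_PiM_cong) auto
  show "sets (distr (PiM UNIV M) (PiM UNIV N) (\<lambda>\<omega> i. f i (\<omega> i))) = sets (PiM UNIV N)" by simp
  show "finite_measure (PiM UNIV (\<lambda>i. distr (M i) (N i) (f i)))"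
  proof -
    interpret prob_space "PiM UNIV (\<lambda>i. distr (M i) (N i) (f i))"
      using M f by (intro prob_space_PiM prob_space.prob_space_distr) auto
    show ?thesis by unfold_locales
  qed
  have mf: "(\<lambda>\<omega> i. f i (\<omega> i)) \<in> measurable (PiM UNIV M) (PiM UNIV N)"
  proof (rule measurable_PiM_single')
    fix i show "(\<lambda>\<omega>. f i (\<omega> i)) \<in> measurable (PiM UNIV M) (N i)"
      by (rule measurable_compose[OF _ f]) (rule measurable_component_singleton, simp)
  qed (auto simp: space_PiM PiE_iff intro!: measurable_space[OF f])
  fix A J assume J: "finite J" "J \<subseteq> (UNIV::'i set)" and A: "\<And>i. i \<in> J \<Longrightarrow> A i \<in> sets (N i)"
  have "emeasure (PiM UNIV (\<lambda>i. distr (M i) (N i) (f i))) (prod_emb UNIV N J (Pi\<^sub>E J A))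
      = emeasure (PiM UNIV (\<lambda>i. distr (M i) (N i) (f i))) (prod_emb UNIV (\<lambda>i. distr (M i) (N i) (f i)) J (Pi\<^sub>E J A))"
    by (simp add: prod_emb_def)
  also have "\<dots> = (\<Prod>i\<in>J. emeasure (distr (M i) (N i) (f i)) (A i))"
    using J A M f by (intro emeasure_PiM_emb prob_space.prob_space_distr) auto
  also have "\<dots> = (\<Prod>i\<in>J. emeasure (M i) (f i -` A i \<inter> space (M i)))"
    using A f by (intro prod.cong refl emeasure_distr) auto
  also have "\<dots> = emeasure (PiM UNIV M) (prod_emb UNIV M J (Pi\<^sub>E J (\<lambda>i. f i -` A i \<inter> space (M i))))"
    using J A M f by (intro emeasure_PiM_emb[symmetric]) (auto intro!: measurable_sets)
  also have "prod_emb UNIV M J (Pi\<^sub>E J (\<lambda>i. f i -` A i \<inter> space (M i)))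
      = (\<lambda>\<omega> i. f i (\<omega> i)) -` prod_emb UNIV N J (Pi\<^sub>E J A) \<inter> space (PiM UNIV M)"
    using measurable_space[OF f]
    by (auto simp: prod_emb_def space_PiM PiE_iff)
  also have "emeasure (PiM UNIV M) \<dots> = emeasure (distr (PiM UNIV M) (PiM UNIV N) (\<lambda>\<omega> i. f i (\<omega> i))) (prod_emb UNIV N J (Pi\<^sub>E J A))"
    using J A mf by (intro emeasure_distr[symmetric]) (auto intro!: sets_PiM_I)
  finally show "emeasure (PiM UNIV (\<lambda>i. distr (M i) (N i) (f i))) (prod_emb UNIV N J (Pi\<^sub>E J A)) = emeasure (distr (PiM UNIV M) (PiM UNIV N) (\<lambda>\<omega> i. f i (\<omega> i))) (prod_emb UNIV N J (Pi\<^sub>E J A))" .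
qed



definition shiftw :: "nat \<Rightarrow> (nat list \<Rightarrow> 'a) \<Rightarrow> nat list \<Rightarrow> 'a" where
  "shiftw j \<omega> = (\<lambda>v. \<omega> (j # v))"

definition joinw :: "'a \<times> (nat \<Rightarrow> nat list \<Rightarrow> 'a) \<Rightarrow> nat list \<Rightarrow> 'a" where
  "joinw z w = (case w of [] \<Rightarrow> fst z | j # v \<Rightarrow> snd z j v)"

lemma joinw_simps[simp]: "joinw z [] = fst z" "joinw z (j # v) = snd z j v"
  by (simp_all add: joinw_def)

lemma shiftw_joinw[simp]: "shiftw j (joinw z) = snd z j"
  by (simp add: shiftw_def fun_eq_iff)

lemma measurable_joinw:
  "joinw \<in> measurable (P \<Otimes>\<^sub>M PiM UNIV (\<lambda>_::nat. PiM UNIV (\<lambda>_::nat list. P))) (PiM UNIV (\<lambda>_::nat list. P))"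
proof (rule measurable_PiM_single')
  fix w :: "nat list"
  show "(\<lambda>z. joinw z w) \<in> measurable (P \<Otimes>\<^sub>M PiM UNIV (\<lambda>_::nat. PiM UNIV (\<lambda>_::nat list. P))) P"
  proof (cases w)
    case Nil then show ?thesis by simp
  next
    case (Cons j v)
    have "(\<lambda>Y. Y j v) \<in> measurable (PiM UNIV (\<lambda>_::nat. PiM UNIV (\<lambda>_::nat list. P))) P"
    proof -
      have 1: "(\<lambda>Y. Y j) \<in> measurable (PiM UNIV (\<lambda>_::nat. PiM UNIV (\<lambda>_::nat list. P))) (PiM UNIV (\<lambda>_::nat list. P))"
        by (rule measurable_component_singleton) simp
      have 2: "(\<lambda>x. x v) \<in> measurable (PiM UNIV (\<lambda>_::nat list. P)) P"
        by (rule measurable_component_singleton) simp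
      show ?thesis using measurable_compose[OF 1 2] .
    qed
    then show ?thesis using Cons by (simp add: measurable_compose[OF measurable_snd])
  qed
next
  show "joinw \<in> space (P \<Otimes>\<^sub>M PiM UNIV (\<lambda>_::nat. PiM UNIV (\<lambda>_::nat list. P))) \<rightarrow> (\<Pi>\<^sub>E i\<in>UNIV. space P)"
    by (auto simp: space_pair_measure space_PiM PiE_iff joinw_def split: list.splits)
qed

lemma measurable_shiftw[measurable]:
  "shiftw j \<in> measurable (PiM UNIV (\<lambda>_::nat list. P)) (PiM UNIV (\<lambda>_::nat list. P))"
  unfolding shiftw_def
  by (rule measurable_PiM_single') (auto simp: space_PiM PiE_iff)

lemma prod_split_list:
  fixes J :: "nat list set" and g :: "nat list \<Rightarrow> ennreal"
  assumes "finite J"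
  shows "(\<Prod>w\<in>J. g w) = (if [] \<in> J then g [] else 1) *
    (\<Prod>j\<in>hd ` (J - {[]}). \<Prod>v\<in>{v. j # v \<in> J}. g (j # v))"
proof -
  have fin: "finite {v. j # v \<in> J}" for j
  proof -
    have "{v. j # v \<in> J} = Cons j -` J" by auto
    then show ?thesis using assms by (simp add: finite_vimageI)
  qed
  define K where "K = (SIGMA j:hd ` (J - {[]}). {v. j # v \<in> J})"
  have eq: "J - {[]} = (\<lambda>(j, v). j # v) ` K"
  proof (intro set_eqI iffI)
    fix w assume "w \<in> J - {[]}"
    then obtain j v where "w = j # v" "j # v \<in> J" by (cases w) auto
    then show "w \<in> (\<lambda>(j, v). j # v) ` K" unfolding K_def
      by (intro image_eqI[where x="(j, v)"]) (auto intro!: image_eqI[where x="j # v"])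
  qed (auto simp: K_def)
  have inj: "inj_on (\<lambda>(j, v). j # v) K"
    by (auto simp: inj_on_def)
  have finK: "finite K" unfolding K_def using assms fin by auto
  have "(\<Prod>w\<in>J - {[]}. g w) = (\<Prod>w\<in>(\<lambda>(j, v). j # v) ` K. g w)"
    by (rule arg_cong[OF eq])
  also have "\<dots> = (\<Prod>(j, v)\<in>K. g (j # v))"
    by (subst prod.reindex[OF inj]) (simp add: split_beta comp_def)
  also have "\<dots> = (\<Prod>j\<in>hd ` (J - {[]}). \<Prod>v\<in>{v. j # v \<in> J}. g (j # v))"
    unfolding K_def using assms fin by (subst prod.Sigma) auto
  finally have "(\<Prod>w\<in>J - {[]}. g w) = (\<Prod>j\<in>hd ` (J - {[]}). \<Prod>v\<in>{v. j # v \<in> J}. g (j # v))" .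
  moreover have "(\<Prod>w\<in>J. g w) = (if [] \<in> J then g [] else 1) * (\<Prod>w\<in>J - {[]}. g w)"
    using assms by (auto simp: prod.remove)
  ultimately show ?thesis by simp
qed

lemma distr_joinw:
  assumes P: "prob_space P"
  shows "distr (P \<Otimes>\<^sub>M PiM UNIV (\<lambda>_::nat. PiM UNIV (\<lambda>_::nat list. P))) (PiM UNIV (\<lambda>_::nat list. P)) joinw
    = PiM UNIV (\<lambda>_::nat list. P)"
proof (rule measure_eqI_PiM_infinite[symmetric])
  interpret P: prob_space P by fact
  let ?O = "PiM UNIV (\<lambda>_::nat list. P)"
  let ?Q = "P \<Otimes>\<^sub>M PiM UNIV (\<lambda>_::nat. ?O)"
  interpret O: prob_space ?O using assms by (auto intro!: prob_space_PiM)
  interpret PO: prob_space "PiM UNIV (\<lambda>_::nat. ?O)" by (rule prob_space_PiM) (rule O.prob_space_axioms)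
  show "sets ?O = sets ?O" ..
  show "sets (distr ?Q ?O joinw) = sets ?O" by simp
  show "finite_measure ?O" by unfold_locales
  fix A J assume J: "finite J" "J \<subseteq> (UNIV::nat list set)" and A: "\<And>i. i \<in> J \<Longrightarrow> A i \<in> sets P"
  define J1 where "J1 = hd ` (J - {[]})"
  define Jj where "Jj j = {v. j # v \<in> J}" for j
  have finJ1: "finite J1" using J by (simp add: J1_def)
  have finJj: "finite (Jj j)" for j
  proof -
    have "Jj j = Cons j -` J" by (auto simp: Jj_def)
    then show ?thesis using J by (simp add: finite_vimageI)
  qed
  define B0 where "B0 = (if [] \<in> J then A [] else space P)"
  define C where "C j = prod_emb UNIV (\<lambda>_::nat list. P) (Jj j) (Pi\<^sub>E (Jj j) (\<lambda>v. A (j # v)))" for j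
  have B0: "B0 \<in> sets P" using A by (auto simp: B0_def)
  have C: "C j \<in> sets ?O" for j
    using A finJj by (auto simp: C_def Jj_def intro!: sets_PiM_I)
  define S where "S = prod_emb UNIV (\<lambda>_::nat. ?O) J1 (Pi\<^sub>E J1 C)"
  have S: "S \<in> sets (PiM UNIV (\<lambda>_::nat. ?O))"
    using C finJ1 by (auto simp: S_def intro!: sets_PiM_I)
  have Asp: "w \<in> J \<Longrightarrow> A w \<subseteq> space P" for w using A sets.sets_into_space by blast
  have pre: "joinw -` prod_emb UNIV (\<lambda>_. P) J (Pi\<^sub>E J A) \<inter> space ?Q = B0 \<times> S"
  proof (intro set_eqI iffI)
    fix z assume z: "z \<in> joinw -` prod_emb UNIV (\<lambda>_. P) J (Pi\<^sub>E J A) \<inter> space ?Q"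
    then show "z \<in> B0 \<times> S"
      by (cases z) (auto simp: B0_def S_def C_def prod_emb_def PiE_iff space_pair_measure space_PiM J1_def Jj_def)
  next
    fix z assume z: "z \<in> B0 \<times> S"
    have "joinw z w \<in> A w" if "w \<in> J" for w
    proof (cases w)
      case Nil then show ?thesis using z that by (cases z) (auto simp: B0_def)
    next
      case (Cons j v)
      then have "j \<in> J1" "v \<in> Jj j" using that by (force simp: J1_def Jj_def)+
      then show ?thesis using z Cons by (cases z) (auto simp: S_def C_def prod_emb_def PiE_iff)
    qed
    moreover have "z \<in> space ?Q"
      using z sets.sets_into_space[OF S] sets.sets_into_space[OF B0] by (cases z) (auto simp: space_pair_measure)
    moreover then have "joinw z \<in> space ?O" using measurable_space[OF measurable_joinw] by blast
    ultimately show "z \<in> joinw -` prod_emb UNIV (\<lambda>_. P) J (Pi\<^sub>E J A) \<inter> space ?Q"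
      by (auto simp: prod_emb_def PiE_iff space_PiM)
  qed
  have "emeasure (distr ?Q ?O joinw) (prod_emb UNIV (\<lambda>_. P) J (Pi\<^sub>E J A)) = emeasure ?Q (B0 \<times> S)"
    using J A by (subst emeasure_distr) (auto intro!: sets_PiM_I measurable_joinw simp: pre)
  also have "\<dots> = emeasure P B0 * emeasure (PiM UNIV (\<lambda>_::nat. ?O)) S"
    using B0 S by (rule PO.emeasure_pair_measure_Times)
  also have "emeasure (PiM UNIV (\<lambda>_::nat. ?O)) S = (\<Prod>j\<in>J1. emeasure ?O (C j))"
    unfolding S_def using finJ1 C by (intro emeasure_PiM_emb O.prob_space_axioms) auto
  also have "\<dots> = (\<Prod>j\<in>J1. \<Prod>v\<in>Jj j. emeasure P (A (j # v)))"
    unfolding C_def using finJj A by (intro prod.cong refl emeasure_PiM_emb P) (auto simp: Jj_def)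
  also have "emeasure P B0 = (if [] \<in> J then emeasure P (A []) else 1)"
    by (simp add: B0_def P.emeasure_space_1)
  also have "(if [] \<in> J then emeasure P (A []) else 1) * (\<Prod>j\<in>J1. \<Prod>v\<in>Jj j. emeasure P (A (j # v)))
      = (\<Prod>w\<in>J. emeasure P (A w))"
    unfolding J1_def Jj_def by (rule prod_split_list[symmetric, OF J(1)])
  also have "\<dots> = emeasure ?O (prod_emb UNIV (\<lambda>_. P) J (Pi\<^sub>E J A))"
    using J A by (intro emeasure_PiM_emb[symmetric] P) auto
  finally show "emeasure ?O (prod_emb UNIV (\<lambda>_. P) J (Pi\<^sub>E J A)) = emeasure (distr ?Q ?O joinw) (prod_emb UNIV (\<lambda>_. P) J (Pi\<^sub>E J A))" by simp
qed



lemma SUP_restrict_bot: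
  fixes h :: "'b \<Rightarrow> ereal"
  shows "(SUP i\<in>{i. P i}. h i) = (SUP i. if P i then h i else -\<infinity>)"
proof (rule antisym)
  show "(SUP i\<in>{i. P i}. h i) \<le> (SUP i. if P i then h i else -\<infinity>)"
  proof (rule SUP_least)
    fix i assume "i \<in> {i. P i}"
    then have "h i = (if P i then h i else -\<infinity>)" by simp
    also have "\<dots> \<le> (SUP i. if P i then h i else -\<infinity>)" by (rule SUP_upper) simp
    finally show "h i \<le> (SUP i. if P i then h i else -\<infinity>)" .
  qed
  show "(SUP i. if P i then h i else -\<infinity>) \<le> (SUP i\<in>{i. P i}. h i)"
  proof (rule SUP_least)
    fix i show "(if P i then h i else -\<infinity>) \<le> (SUP i\<in>{i. P i}. h i)"
    proof (cases "P i")
      case True then show ?thesis by (simp add: SUP_upper)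
    qed simp
  qed
qed

lemma rde_map_alt:
  "rde_map f X = max 0 (SUP i. if enat i < fst f then X i + ereal (snd f i) else -\<infinity>)"
  unfolding rde_map_def SUP_restrict_bot ..

lemma family_meas:
  assumes "sets F = sets family_space"
  shows "fst \<in> measurable F (count_space UNIV)" "(\<lambda>f. snd f i) \<in> borel_measurable F"
proof -
  show "fst \<in> measurable F (count_space UNIV)"
    by (subst measurable_cong_sets[OF assms refl]) (simp add: family_space_def)
  have "(\<lambda>f. snd f i) \<in> borel_measurable family_space"
    unfolding family_space_def by measurable
  then show "(\<lambda>f. snd f i) \<in> borel_measurable F"
    by (subst measurable_cong_sets[OF assms refl])
qed

lemma measurable_rde_map:
  assumes sF: "sets F = sets family_space"
    and f: "f \<in> measurable M F"
    and X: "\<And>i. (\<lambda>x. X x i) \<in> borel_measurable M"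
  shows "(\<lambda>x. rde_map (f x) (X x)) \<in> borel_measurable M"
proof -
  have fst: "(\<lambda>x. fst (f x)) \<in> measurable M (count_space UNIV)"
    using measurable_compose[OF f family_meas(1)[OF sF]] .
  have snd: "(\<lambda>x. snd (f x) i) \<in> borel_measurable M" for i
    using measurable_compose[OF f family_meas(2)[OF sF]] .
  have pr: "{x \<in> space M. enat i < fst (f x)} \<in> sets M" for i
  proof -
    have eq: "{x \<in> space M. enat i < fst (f x)} = (\<lambda>x. fst (f x)) -` {n. enat i < n} \<inter> space M" by auto
    show ?thesis unfolding eq by (rule measurable_sets[OF fst]) simp
  qed
  have "(\<lambda>x. if enat i < fst (f x) then X x i + ereal (snd (f x) i) else -\<infinity>) \<in> borel_measurable M" for i
    by (rule measurable_If[OF borel_measurable_ereal_add[OF X borel_measurable_ereal[OF snd]] borel_measurable_const pr])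
  then have "(\<lambda>x. SUP i. if enat i < fst (f x) then X x i + ereal (snd (f x) i) else -\<infinity>) \<in> borel_measurable M"
    by (intro borel_measurable_SUP[where I=UNIV and F="\<lambda>i x. if enat i < fst (f x) then X x i + ereal (snd (f x) i) else -\<infinity>"]) auto
  then show ?thesis
    unfolding rde_map_alt by (intro borel_measurable_max borel_measurable_const)
qed

lemma distr_pair_snd':
  assumes "prob_space N" "sigma_finite_measure M"
  shows "distr (N \<Otimes>\<^sub>M M) M snd = M"
proof (intro measure_eqI)
  interpret N: prob_space N by fact
  interpret M: sigma_finite_measure M by fact
  interpret NM: pair_sigma_finite N M by unfold_locales
  fix A assume A: "A \<in> sets (distr (N \<Otimes>\<^sub>M M) M snd)"
  from A have "emeasure (distr (N \<Otimes>\<^sub>M M) M snd) A = emeasure (N \<Otimes>\<^sub>M M) (space N \<times> A)"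
    by (auto simp add: emeasure_distr space_pair_measure dest: sets.sets_into_space intro!: arg_cong2[where f=emeasure])
  with A show "emeasure (distr (N \<Otimes>\<^sub>M M) M snd) A = emeasure M A"
    by (simp add: M.emeasure_pair_measure_Times N.emeasure_space_1)
qed simp



lemma meas_comp_comp:
  assumes "g \<in> measurable (M i) N" "i \<in> I"
  shows "(\<lambda>x. g (x i)) \<in> measurable (PiM I M) N"
  by (rule measurable_compose[of "\<lambda>x. x i" _ "M i"]) (auto simp: assms)

lemma meas_comp_compc:
  assumes "g \<in> measurable M N" "i \<in> I"
  shows "(\<lambda>x. g (x i)) \<in> measurable (PiM I (\<lambda>_. M)) N"
  by (rule measurable_compose[of "\<lambda>x. x i" _ M]) (auto simp: assms)

lemma meas_comp_snd:
  assumes "g \<in> measurable B N"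
  shows "(\<lambda>x. g (snd x)) \<in> measurable (A \<Otimes>\<^sub>M B) N"
  by (rule measurable_compose[of snd _ B]) (auto simp: assms)

lemma meas_comp_fst:
  assumes "g \<in> measurable A N"
  shows "(\<lambda>x. g (fst x)) \<in> measurable (A \<Otimes>\<^sub>M B) N"
  by (rule measurable_compose[of fst _ A]) (auto simp: assms)

lemma measurable_Tmap:
  assumes sF: "sets F = sets family_space"
  shows "(\<lambda>(f, X). rde_map f X) \<in> borel_measurable (F \<Otimes>\<^sub>M PiM UNIV (\<lambda>_::nat. (borel::ereal measure)))"
proof -
  have "(\<lambda>z. rde_map (fst z) (snd z)) \<in> borel_measurable (F \<Otimes>\<^sub>M PiM UNIV (\<lambda>_::nat. (borel::ereal measure)))"
  proof (rule measurable_rde_map[OF sF measurable_fst])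
    fix i
    have 1: "(\<lambda>X. X i) \<in> measurable (PiM UNIV (\<lambda>_::nat. (borel::ereal measure))) borel"
      by (rule measurable_component_singleton) simp
    show "(\<lambda>z. snd z i) \<in> borel_measurable (F \<Otimes>\<^sub>M PiM UNIV (\<lambda>_::nat. (borel::ereal measure)))"
      by (rule meas_comp_snd[OF 1])
  qed
  then show ?thesis by (simp add: split_beta)
qed

lemma rde_step:
  assumes P: "prob_space P" and F: "prob_space F" "sets F = sets family_space"
    and g: "g \<in> measurable P F" "distr P F g = F"
    and Psi: "Psi \<in> borel_measurable (PiM UNIV (\<lambda>_::nat list. P))"
    and Phi: "\<And>z. Phi z = rde_map (g (z [])) (\<lambda>j. Psi (shiftw j z))"
  shows "distr (PiM UNIV (\<lambda>_::nat list. P)) borel Phi = T_op F (distr (PiM UNIV (\<lambda>_::nat list. P)) borel Psi)"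
proof -
  let ?O = "PiM UNIV (\<lambda>_::nat list. P)"
  let ?PO = "PiM UNIV (\<lambda>_::nat. ?O)"
  let ?Q = "P \<Otimes>\<^sub>M ?PO"
  let ?D = "distr ?O borel Psi"
  interpret O: prob_space ?O using P by (auto intro!: prob_space_PiM)
  interpret D: prob_space ?D using Psi by (rule O.prob_space_distr)
  have gr: "(\<lambda>z. g (z [])) \<in> measurable ?O F"
    by (rule meas_comp_compc[OF g(1)]) simp
  have Phim: "Phi \<in> borel_measurable ?O"
  proof -
    have "(\<lambda>z. rde_map (g (z [])) (\<lambda>j. Psi (shiftw j z))) \<in> borel_measurable ?O"
      by (rule measurable_rde_map[OF F(2) gr]) (rule measurable_compose[OF measurable_shiftw Psi])
    moreover have "Phi = (\<lambda>z. rde_map (g (z [])) (\<lambda>j. Psi (shiftw j z)))" by (rule ext) (rule Phi)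
    ultimately show ?thesis by simp
  qed
  have "distr ?O borel Phi = distr (distr ?Q ?O joinw) borel Phi"
    by (simp add: distr_joinw P)
  also have "\<dots> = distr ?Q borel (Phi \<circ> joinw)"
    by (rule distr_distr[OF Phim measurable_joinw])
  also have "\<dots> = distr ?Q borel (\<lambda>(x, Y). rde_map (g x) (\<lambda>j. Psi (Y j)))"
    by (rule distr_cong) (auto simp: Phi)
  finally have L: "distr ?O borel Phi = distr ?Q borel (\<lambda>(x, Y). rde_map (g x) (\<lambda>j. Psi (Y j)))" .
  have psim: "(\<lambda>\<omega> i. Psi (\<omega> i)) \<in> measurable ?PO (PiM UNIV (\<lambda>_::nat. borel))"
    by (rule measurable_PiM_single') (auto intro!: meas_comp_compc[OF Psi] simp: space_PiM)
  have "PiM UNIV (\<lambda>_::nat. ?D) = distr ?PO (PiM UNIV (\<lambda>_::nat. borel)) (\<lambda>\<omega> i. Psi (\<omega> i))"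
    by (rule distr_PiM_map[symmetric]) (auto intro: O.prob_space_axioms Psi)
  then have "F \<Otimes>\<^sub>M PiM UNIV (\<lambda>_::nat. ?D) = distr P F g \<Otimes>\<^sub>M distr ?PO (PiM UNIV (\<lambda>_::nat. borel)) (\<lambda>\<omega> i. Psi (\<omega> i))"
    using g by simp
  also have "\<dots> = distr ?Q (F \<Otimes>\<^sub>M PiM UNIV (\<lambda>_::nat. borel)) (\<lambda>(x, Y). (g x, \<lambda>i. Psi (Y i)))"
  proof (rule pair_measure_distr[OF g(1) psim])
    interpret PO: prob_space ?PO by (rule prob_space_PiM) (rule O.prob_space_axioms)
    interpret X: prob_space "distr ?PO (PiM UNIV (\<lambda>_::nat. borel)) (\<lambda>\<omega> i. Psi (\<omega> i))"
      by (rule PO.prob_space_distr[OF psim])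
    show "sigma_finite_measure (distr ?PO (PiM UNIV (\<lambda>_::nat. borel)) (\<lambda>\<omega> i. Psi (\<omega> i)))"
      by unfold_locales
  qed
  finally have R1: "F \<Otimes>\<^sub>M PiM UNIV (\<lambda>_::nat. ?D) = distr ?Q (F \<Otimes>\<^sub>M PiM UNIV (\<lambda>_::nat. borel)) (\<lambda>(x, Y). (g x, \<lambda>i. Psi (Y i)))" .
  have "T_op F ?D = distr (distr ?Q (F \<Otimes>\<^sub>M PiM UNIV (\<lambda>_::nat. borel)) (\<lambda>(x, Y). (g x, \<lambda>i. Psi (Y i)))) borel (\<lambda>(f, X). rde_map f X)"
    unfolding T_op_def R1 ..
  also have "\<dots> = distr ?Q borel ((\<lambda>(f, X). rde_map f X) \<circ> (\<lambda>(x, Y). (g x, \<lambda>i. Psi (Y i))))"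
  proof (rule distr_distr[OF measurable_Tmap[OF F(2)]])
    have "(\<lambda>z. (g (fst z), \<lambda>i. Psi (snd z i))) \<in> measurable ?Q (F \<Otimes>\<^sub>M PiM UNIV (\<lambda>_::nat. borel))"
      by (rule measurable_Pair[OF meas_comp_fst[OF g(1)] meas_comp_snd[OF psim]])
    then show "(\<lambda>(x, Y). (g x, \<lambda>i. Psi (Y i))) \<in> measurable ?Q (F \<Otimes>\<^sub>M PiM UNIV (\<lambda>_::nat. borel))"
      by (simp add: split_beta)
  qed
  also have "\<dots> = distr ?Q borel (\<lambda>(x, Y). rde_map (g x) (\<lambda>j. Psi (Y j)))"
    by (rule distr_cong) auto
  finally show ?thesis using L by simp
qed



lemma alive_Cons_shift: "alive \<omega> (j # w) \<longleftrightarrow> enat j < fst (\<omega> []) \<and> alive (shiftw j \<omega>) w"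
  by (simp add: shiftw_def)

lemma pos_Cons_shift: "pos \<omega> (j # w) = snd (\<omega> []) j + pos (shiftw j \<omega>) w"
  by (simp add: shiftw_def)

declare alive.simps(2)[simp del] pos.simps(2)[simp del]

lemma rde_map_mono:
  assumes "\<And>j. enat j < fst f \<Longrightarrow> X j \<le> Y j"
  shows "rde_map f X \<le> rde_map f Y"
  unfolding rde_map_def
  by (intro max.mono order.refl SUP_mono) (auto intro!: add_right_mono assms)

lemma rde_map_cong:
  assumes "\<And>j. enat j < fst f \<Longrightarrow> X j = Y j"
  shows "rde_map f X = rde_map f Y"
  by (intro antisym rde_map_mono) (auto simp: assms)

lemma rde_map_nonneg: "0 \<le> rde_map f X"
  by (simp add: rde_map_def)

lemma rde_map_upper:
  assumes "enat j < fst f"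
  shows "X j + ereal (snd f j) \<le> rde_map f X"
proof -
  have "X j + ereal (snd f j) \<le> (SUP i\<in>{i. enat i < fst f}. X i + ereal (snd f i))"
    using assms by (intro SUP_upper) auto
  then show ?thesis unfolding rde_map_def by (simp add: le_max_iff_disj)
qed

lemma allmax_ge_pos: "alive \<omega> w \<Longrightarrow> ereal (pos \<omega> w) \<le> allmax \<omega>"
  unfolding allmax_def by (rule SUP_upper) simp

lemma allmax_nonneg: "0 \<le> allmax \<omega>"
  using allmax_ge_pos[of \<omega> "[]"] by (simp add: zero_ereal_def)

lemma allmax_rec: "allmax \<omega> = rde_map (\<omega> []) (\<lambda>j. allmax (shiftw j \<omega>))"
proof (rule antisym)
  show "allmax \<omega> \<le> rde_map (\<omega> []) (\<lambda>j. allmax (shiftw j \<omega>))"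
    unfolding allmax_def
  proof (rule SUP_least)
    fix w assume "w \<in> {w. alive \<omega> w}"
    then have a: "alive \<omega> w" by simp
    show "ereal (pos \<omega> w) \<le> rde_map (\<omega> []) (\<lambda>j. SUP w\<in>{w. alive (shiftw j \<omega>) w}. ereal (pos (shiftw j \<omega>) w))"
    proof (cases w)
      case Nil then show ?thesis using rde_map_nonneg by (simp add: zero_ereal_def)
    next
      case (Cons j v)
      with a have j: "enat j < fst (\<omega> [])" and v: "alive (shiftw j \<omega>) v"
        by (auto simp: alive_Cons_shift)
      have "ereal (pos \<omega> w) = ereal (pos (shiftw j \<omega>) v) + ereal (snd (\<omega> []) j)"
        using Cons by (simp add: pos_Cons_shift add.commute)
      also have "\<dots> \<le> (SUP w\<in>{w. alive (shiftw j \<omega>) w}. ereal (pos (shiftw j \<omega>) w)) + ereal (snd (\<omega> []) j)"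
        using v by (intro add_right_mono SUP_upper) auto
      also have "\<dots> \<le> rde_map (\<omega> []) (\<lambda>j. SUP w\<in>{w. alive (shiftw j \<omega>) w}. ereal (pos (shiftw j \<omega>) w))"
        by (rule rde_map_upper[OF j, where X="\<lambda>j. SUP w\<in>{w. alive (shiftw j \<omega>) w}. ereal (pos (shiftw j \<omega>) w)"])
      finally show ?thesis .
    qed
  qed
  show "rde_map (\<omega> []) (\<lambda>j. allmax (shiftw j \<omega>)) \<le> allmax \<omega>"
    unfolding rde_map_def
  proof (rule max.boundedI)
    show "0 \<le> allmax \<omega>" by (rule allmax_nonneg)
    show "(SUP i\<in>{i. enat i < fst (\<omega> [])}. allmax (shiftw i \<omega>) + ereal (snd (\<omega> []) i)) \<le> allmax \<omega>"
    proof (rule SUP_least)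
      fix j assume "j \<in> {i. enat i < fst (\<omega> [])}"
      then have j: "enat j < fst (\<omega> [])" by simp
      have ne: "{w. alive (shiftw j \<omega>) w} \<noteq> {}" by (auto intro: exI[of _ "[]"])
      have "allmax (shiftw j \<omega>) + ereal (snd (\<omega> []) j)
          = (SUP v\<in>{w. alive (shiftw j \<omega>) w}. ereal (pos (shiftw j \<omega>) v) + ereal (snd (\<omega> []) j))"
        unfolding allmax_def by (rule SUP_ereal_add_left[OF ne, symmetric]) simp
      also have "\<dots> \<le> allmax \<omega>"
      proof (rule SUP_least)
        fix v assume "v \<in> {w. alive (shiftw j \<omega>) w}"
        then have "alive \<omega> (j # v)" using j by (simp add: alive_Cons_shift)
        then have "ereal (pos \<omega> (j # v)) \<le> allmax \<omega>" by (rule allmax_ge_pos)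
        then show "ereal (pos (shiftw j \<omega>) v) + ereal (snd (\<omega> []) j) \<le> allmax \<omega>"
          by (simp add: pos_Cons_shift add.commute)
      qed
      finally show "allmax (shiftw j \<omega>) + ereal (snd (\<omega> []) j) \<le> allmax \<omega>" .
    qed
  qed
qed

fun Am :: "nat \<Rightarrow> (nat list \<Rightarrow> family) \<Rightarrow> ereal" where
  "Am 0 \<omega> = 0"
| "Am (Suc n) \<omega> = rde_map (\<omega> []) (\<lambda>j. Am n (shiftw j \<omega>))"

lemma Am_nonneg: "0 \<le> Am n \<omega>"
  by (cases n) (auto simp: rde_map_nonneg)

lemma Am_le_allmax: "Am n \<omega> \<le> allmax \<omega>"
proof (induction n arbitrary: \<omega>)
  case 0 then show ?case by (simp add: allmax_nonneg)
next
  case (Suc n)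
  have "Am (Suc n) \<omega> \<le> rde_map (\<omega> []) (\<lambda>j. allmax (shiftw j \<omega>))"
    by (simp, rule rde_map_mono, rule Suc)
  then show ?case by (simp add: allmax_rec[symmetric])
qed

lemma Am_Suc_mono: "Am n \<omega> \<le> Am (Suc n) \<omega>"
proof (induction n arbitrary: \<omega>)
  case 0 then show ?case by (simp add: rde_map_nonneg)
next
  case (Suc n)
  have h: "rde_map (\<omega> []) (\<lambda>j. Am n (shiftw j \<omega>)) \<le> rde_map (\<omega> []) (\<lambda>j. Am (Suc n) (shiftw j \<omega>))"
    by (rule rde_map_mono) (rule Suc.IH)
  have e1: "Am (Suc n) \<omega> = rde_map (\<omega> []) (\<lambda>j. Am n (shiftw j \<omega>))" by (rule Am.simps(2))
  have e2: "Am (Suc (Suc n)) \<omega> = rde_map (\<omega> []) (\<lambda>j. Am (Suc n) (shiftw j \<omega>))" by (rule Am.simps(2))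
  show ?case by (subst e1, subst e2, rule h)
qed

lemma Am_incseq: "incseq (\<lambda>n. Am n \<omega>)"
  by (rule incseq_SucI) (rule Am_Suc_mono)

lemma pos_le_Am: "alive \<omega> w \<Longrightarrow> ereal (pos \<omega> w) \<le> Am (length w) \<omega>"
proof (induction w arbitrary: \<omega>)
  case Nil then show ?case by simp
next
  case (Cons j v)
  then have j: "enat j < fst (\<omega> [])" and v: "alive (shiftw j \<omega>) v"
    by (auto simp: alive_Cons_shift)
  have "ereal (pos \<omega> (j # v)) = ereal (pos (shiftw j \<omega>) v) + ereal (snd (\<omega> []) j)"
    by (simp add: pos_Cons_shift add.commute)
  also have "\<dots> \<le> Am (length v) (shiftw j \<omega>) + ereal (snd (\<omega> []) j)"
    using Cons.IH[OF v] by (rule add_right_mono)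
  also have "\<dots> \<le> Am (length (j # v)) \<omega>"
    using rde_map_upper[OF j, where X="\<lambda>j. Am (length v) (shiftw j \<omega>)"] by simp
  finally show ?case .
qed

lemma allmax_SUP_Am: "allmax \<omega> = (SUP n. Am n \<omega>)"
proof (rule antisym)
  show "allmax \<omega> \<le> (SUP n. Am n \<omega>)"
    unfolding allmax_def
  proof (rule SUP_least)
    fix w assume "w \<in> {w. alive \<omega> w}"
    then have "ereal (pos \<omega> w) \<le> Am (length w) \<omega>" by (intro pos_le_Am) simp
    also have "\<dots> \<le> (SUP n. Am n \<omega>)" by (rule SUP_upper) simp
    finally show "ereal (pos \<omega> w) \<le> (SUP n. Am n \<omega>)" .
  qed
  show "(SUP n. Am n \<omega>) \<le> allmax \<omega>"
    by (rule SUP_least) (rule Am_le_allmax)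
qed

lemma alive_append: "alive \<omega> (u @ v) \<Longrightarrow> alive \<omega> u"
  by (induction u arbitrary: \<omega>) (auto simp: alive_Cons_shift)

lemma alive_take: "alive \<omega> w \<Longrightarrow> alive \<omega> (take n w)"
  using alive_append[of \<omega> "take n w" "drop n w"] by simp

lemma genempty_allmax:
  assumes "\<not> (\<exists>w. alive \<omega> w \<and> length w = n)"
  shows "Am n \<omega> = allmax \<omega>"
proof (rule antisym)
  show "Am n \<omega> \<le> allmax \<omega>" by (rule Am_le_allmax)
  show "allmax \<omega> \<le> Am n \<omega>"
    unfolding allmax_def
  proof (rule SUP_least)
    fix w assume "w \<in> {w. alive \<omega> w}"
    then have a: "alive \<omega> w" by simp
    have "length w < n"
    proof (rule ccontr)
      assume "\<not> length w < n"
      then have "length (take n w) = n" by simp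
      with alive_take[OF a, of n] assms show False by blast
    qed
    have "ereal (pos \<omega> w) \<le> Am (length w) \<omega>" by (rule pos_le_Am[OF a])
    also have "\<dots> \<le> Am n \<omega>" using Am_incseq[of \<omega>] \<open>length w < n\<close> by (simp add: incseq_def)
    finally show "ereal (pos \<omega> w) \<le> Am n \<omega>" .
  qed
qed

definition famz :: "(nat list \<Rightarrow> family \<times> ereal) \<Rightarrow> nat list \<Rightarrow> family" where
  "famz z = (\<lambda>w. fst (z w))"

lemma famz_shiftw: "famz (shiftw j z) = shiftw j (famz z)"
  by (simp add: famz_def shiftw_def)

lemma famz_Nil: "famz z [] = fst (z [])"
  by (simp add: famz_def)

fun Vr :: "nat \<Rightarrow> (nat list \<Rightarrow> family \<times> ereal) \<Rightarrow> ereal" where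
  "Vr 0 z = snd (z [])"
| "Vr (Suc n) z = rde_map (fst (z [])) (\<lambda>j. Vr n (shiftw j z))"

lemma Am_le_Vr:
  assumes "\<forall>w. 0 \<le> snd (z w)"
  shows "Am n (famz z) \<le> Vr n z"
  using assms
proof (induction n arbitrary: z)
  case 0 then show ?case by simp
next
  case (Suc n)
  have "\<forall>w. 0 \<le> snd (shiftw j z w)" for j using Suc.prems by (simp add: shiftw_def)
  then show ?case
    by (simp only: Am.simps Vr.simps famz_Nil, intro rde_map_mono) (simp add: famz_shiftw[symmetric] Suc.IH)
qed

lemma Vr_genempty:
  assumes "\<not> (\<exists>w. alive (famz z) w \<and> length w = n)"
  shows "Vr n z = Am n (famz z)"
  using assms
proof (induction n arbitrary: z)
  case 0 then show ?case by (auto intro: exI[of _ "[]"])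
next
  case (Suc n)
  show ?case
  proof (simp only: Am.simps Vr.simps famz_Nil, intro rde_map_cong)
    fix j assume j: "enat j < fst (fst (z []))"
    have "\<not> (\<exists>w. alive (famz (shiftw j z)) w \<and> length w = n)"
    proof
      assume "\<exists>w. alive (famz (shiftw j z)) w \<and> length w = n"
      then obtain w where "alive (famz (shiftw j z)) w" "length w = n" by blast
      then have "alive (famz z) (j # w)" "length (j # w) = Suc n"
        using j by (auto simp: alive_Cons_shift famz_shiftw famz_Nil)
      then show False using Suc.prems by blast
    qed
    then show "Vr n (shiftw j z) = Am n (shiftw j (famz z))"
      using Suc.IH by (simp add: famz_shiftw)
  qed
qed

lemma endog_pointwise:
  fixes D :: "nat list \<Rightarrow> family" and X :: "nat list \<Rightarrow> ereal"
  assumes rec: "\<And>w. X w = rde_map (D w) (\<lambda>j. X (w @ [j]))"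
    and nn: "\<And>w. 0 \<le> X w"
  shows "allmax D \<le> X []"
proof -
  have key: "alive (\<lambda>v. D (u @ v)) w \<Longrightarrow> ereal (pos (\<lambda>v. D (u @ v)) w) + X (u @ w) \<le> X u" for u w
  proof (induction w arbitrary: u)
    case Nil then show ?case by simp
  next
    case (Cons j v)
    have sh: "shiftw j (\<lambda>v. D (u @ v)) = (\<lambda>v'. D ((u @ [j]) @ v'))"
      by (simp add: shiftw_def fun_eq_iff)
    from Cons.prems have j: "enat j < fst (D u)" and v: "alive (\<lambda>v'. D ((u @ [j]) @ v')) v"
      by (auto simp: alive_Cons_shift sh)
    have IH: "ereal (pos (\<lambda>v'. D ((u @ [j]) @ v')) v) + X ((u @ [j]) @ v) \<le> X (u @ [j])"
      by (rule Cons.IH[OF v])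
    have "ereal (pos (\<lambda>v. D (u @ v)) (j # v)) + X (u @ j # v)
        = (ereal (pos (\<lambda>v'. D ((u @ [j]) @ v')) v) + X ((u @ [j]) @ v)) + ereal (snd (D u) j)"
      by (cases "X (u @ j # v)") (simp_all add: pos_Cons_shift sh ac_simps)
    also have "\<dots> \<le> X (u @ [j]) + ereal (snd (D u) j)"
      using IH by (rule add_right_mono)
    also have "\<dots> \<le> rde_map (D u) (\<lambda>j. X (u @ [j]))"
      by (rule rde_map_upper[OF j, where X="\<lambda>j. X (u @ [j])"])
    also have "\<dots> = X u" by (rule rec[symmetric])
    finally show ?case .
  qed
  show ?thesis
    unfolding allmax_def
  proof (rule SUP_least)
    fix w assume "w \<in> {w. alive D w}"
    then have "ereal (pos (\<lambda>v. D ([] @ v)) w) + X ([] @ w) \<le> X []" by (intro key) simp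
    moreover have "ereal (pos D w) \<le> ereal (pos D w) + X w" using nn[of w] by (simp add: add_increasing2)
    ultimately show "ereal (pos D w) \<le> X []" by simp
  qed
qed



lemma meas_root_fst:
  assumes sF: "sets F = sets family_space"
  shows "(\<lambda>\<omega>. fst (\<omega> [])) \<in> measurable (PiM UNIV (\<lambda>_::nat list. F)) (count_space UNIV)"
  by (rule meas_comp_compc[OF family_meas(1)[OF sF]]) simp

lemma meas_root_snd:
  assumes sF: "sets F = sets family_space"
  shows "(\<lambda>\<omega>. snd (\<omega> []) j) \<in> borel_measurable (PiM UNIV (\<lambda>_::nat list. F))"
  by (rule meas_comp_compc[OF family_meas(2)[OF sF]]) simp

lemma meas_alive:
  assumes sF: "sets F = sets family_space"
  shows "Measurable.pred (PiM UNIV (\<lambda>_::nat list. F)) (\<lambda>\<omega>. alive \<omega> w)"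
proof (induction w)
  case Nil then show ?case by (simp add: pred_def)
next
  case (Cons j w)
  have 1: "Measurable.pred (PiM UNIV (\<lambda>_::nat list. F)) (\<lambda>\<omega>. enat j < fst (\<omega> []))"
    by (rule measurable_compose[OF meas_root_fst[OF sF] measurable_count_space])
  have 2: "Measurable.pred (PiM UNIV (\<lambda>_::nat list. F)) (\<lambda>\<omega>. alive (shiftw j \<omega>) w)"
    by (rule measurable_compose[OF measurable_shiftw Cons])
  show ?case unfolding alive_Cons_shift by (rule pred_intros_logic(3)[OF 1 2])
qed

lemma meas_alive_set:
  assumes sF: "sets F = sets family_space"
  shows "{\<omega> \<in> space (PiM UNIV (\<lambda>_::nat list. F)). alive \<omega> w} \<in> sets (PiM UNIV (\<lambda>_::nat list. F))"
  using meas_alive[OF sF] by (simp add: pred_def)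

lemma meas_pos:
  assumes sF: "sets F = sets family_space"
  shows "(\<lambda>\<omega>. pos \<omega> w) \<in> borel_measurable (PiM UNIV (\<lambda>_::nat list. F))"
proof (induction w)
  case Nil then show ?case by simp
next
  case (Cons j w)
  have 2: "(\<lambda>\<omega>. pos (shiftw j \<omega>) w) \<in> borel_measurable (PiM UNIV (\<lambda>_::nat list. F))"
    by (rule measurable_compose[OF measurable_shiftw Cons])
  show ?case unfolding pos_Cons_shift by (rule borel_measurable_add[OF meas_root_snd[OF sF] 2])
qed

lemma meas_allmax:
  assumes sF: "sets F = sets family_space"
  shows "allmax \<in> borel_measurable (PiM UNIV (\<lambda>_::nat list. F))"
proof -
  have eq: "allmax = (\<lambda>\<omega>. SUP w. if alive \<omega> w then ereal (pos \<omega> w) else -\<infinity>)"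
    unfolding allmax_def[abs_def] SUP_restrict_bot ..
  have "(\<lambda>\<omega>. if alive \<omega> w then ereal (pos \<omega> w) else -\<infinity>) \<in> borel_measurable (PiM UNIV (\<lambda>_::nat list. F))" for w
    by (rule measurable_If[OF borel_measurable_ereal[OF meas_pos[OF sF]] borel_measurable_const meas_alive_set[OF sF]])
  then show ?thesis unfolding eq
    by (intro borel_measurable_SUP[where I=UNIV and F="\<lambda>w \<omega>. if alive \<omega> w then ereal (pos \<omega> w) else -\<infinity>"]) auto
qed

lemma meas_Am:
  assumes sF: "sets F = sets family_space"
  shows "Am n \<in> borel_measurable (PiM UNIV (\<lambda>_::nat list. F))"
proof (induction n)
  case 0 then show ?case by simp
next
  case (Suc n)
  have "(\<lambda>\<omega>. rde_map (\<omega> []) (\<lambda>j. Am n (shiftw j \<omega>))) \<in> borel_measurable (PiM UNIV (\<lambda>_::nat list. F))"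
  proof (rule measurable_rde_map[OF sF])
    show "(\<lambda>\<omega>. \<omega> []) \<in> measurable (PiM UNIV (\<lambda>_::nat list. F)) F"
      by (rule measurable_component_singleton) simp
  qed (simp add: measurable_compose[OF measurable_shiftw Suc])
  then show ?case by simp
qed

lemma meas_famz:
  shows "famz \<in> measurable (PiM UNIV (\<lambda>_::nat list. F \<Otimes>\<^sub>M N)) (PiM UNIV (\<lambda>_::nat list. F))"
  unfolding famz_def
  by (rule measurable_PiM_single') (auto intro!: meas_comp_compc[OF measurable_fst] simp: space_PiM space_pair_measure PiE_iff mem_Times_iff)

lemma meas_Vr:
  assumes sF: "sets F = sets family_space" and sN: "sets N = sets (borel::ereal measure)"
  shows "Vr n \<in> borel_measurable (PiM UNIV (\<lambda>_::nat list. F \<Otimes>\<^sub>M N))"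
proof (induction n)
  case 0
  have "snd \<in> measurable (F \<Otimes>\<^sub>M N) (borel::ereal measure)"
    by (subst measurable_cong_sets[OF refl sN[symmetric]]) (rule measurable_snd)
  then show ?case by (simp add: meas_comp_compc)
next
  case (Suc n)
  have "(\<lambda>z. rde_map (fst (z [])) (\<lambda>j. Vr n (shiftw j z))) \<in> borel_measurable (PiM UNIV (\<lambda>_::nat list. F \<Otimes>\<^sub>M N))"
    by (rule measurable_rde_map[OF sF meas_comp_compc[OF measurable_fst]])
       (simp_all add: measurable_compose[OF measurable_shiftw Suc])
  then show ?case by simp
qed

lemma meas_genne:
  assumes sF: "sets F = sets family_space"
  shows "{\<omega> \<in> space (PiM UNIV (\<lambda>_::nat list. F)). \<exists>w. alive \<omega> w \<and> length w = n} \<in> sets (PiM UNIV (\<lambda>_::nat list. F))"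
proof -
  have "Measurable.pred (PiM UNIV (\<lambda>_::nat list. F)) (\<lambda>\<omega>. \<exists>w. alive \<omega> w \<and> length w = n)"
    by (intro pred_intros_countable pred_intros_logic meas_alive[OF sF]; simp add: pred_def)
  then show ?thesis by (simp add: pred_def)
qed



lemma prob_B:
  assumes "prob_space F"
  shows "prob_space (PiM UNIV (\<lambda>_::nat list. F))"
  using assms by (auto intro!: prob_space_PiM)

lemma lawR_fixed:
  assumes F: "prob_space F" and sF: "sets F = sets family_space"
  shows "T_op F (lawR F) = lawR F"
proof -
  have "distr (PiM UNIV (\<lambda>_::nat list. F)) borel allmax = T_op F (distr (PiM UNIV (\<lambda>_::nat list. F)) borel allmax)"
    by (rule rde_step[OF F F sF measurable_ident_sets[OF refl] distr_id meas_allmax[OF sF]])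
       (rule allmax_rec)
  then show ?thesis unfolding lawR_def brw_space_def by simp
qed

lemma Am0_fun: "Am 0 = (\<lambda>_. 0)" by (rule ext) simp

lemma T_pow_delta:
  assumes F: "prob_space F" and sF: "sets F = sets family_space"
  shows "(T_op F ^^ n) (return borel 0) = distr (PiM UNIV (\<lambda>_::nat list. F)) borel (Am n)"
proof (induction n)
  case 0
  interpret B: prob_space "PiM UNIV (\<lambda>_::nat list. F)" using F by (rule prob_B)
  show ?case by (simp add: Am0_fun)
next
  case (Suc n)
  have "distr (PiM UNIV (\<lambda>_::nat list. F)) borel (Am (Suc n)) = T_op F (distr (PiM UNIV (\<lambda>_::nat list. F)) borel (Am n))"
    by (rule rde_step[OF F F sF measurable_ident_sets[OF refl] distr_id meas_Am[OF sF]]) simp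
  then show ?case using Suc by (simp del: Am.simps)
qed

lemma T_pow_mu:
  assumes F: "prob_space F" and sF: "sets F = sets family_space"
    and mu: "prob_space \<mu>" and smu: "sets \<mu> = sets (borel::ereal measure)"
  shows "(T_op F ^^ n) \<mu> = distr (PiM UNIV (\<lambda>_::nat list. F \<Otimes>\<^sub>M \<mu>)) borel (Vr n)"
proof (induction n)
  case 0
  interpret mu: prob_space \<mu> by fact
  have Fmu: "prob_space (F \<Otimes>\<^sub>M \<mu>)" using F mu by (rule prob_space_pair)
  have snd_m: "snd \<in> measurable (F \<Otimes>\<^sub>M \<mu>) (borel::ereal measure)"
    by (subst measurable_cong_sets[OF refl smu[symmetric]]) (rule measurable_snd)
  have "distr (PiM UNIV (\<lambda>_::nat list. F \<Otimes>\<^sub>M \<mu>)) borel (Vr 0)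
      = distr (PiM UNIV (\<lambda>_::nat list. F \<Otimes>\<^sub>M \<mu>)) borel (snd \<circ> (\<lambda>z. z []))"
  proof -
    have "Vr 0 = snd \<circ> (\<lambda>z. z [])" by (rule ext) simp
    then show ?thesis by simp
  qed
  also have "\<dots> = distr (distr (PiM UNIV (\<lambda>_::nat list. F \<Otimes>\<^sub>M \<mu>)) (F \<Otimes>\<^sub>M \<mu>) (\<lambda>z. z [])) borel snd"
    by (rule distr_distr[symmetric, OF snd_m]) (rule measurable_component_singleton, simp)
  also have "distr (PiM UNIV (\<lambda>_::nat list. F \<Otimes>\<^sub>M \<mu>)) (F \<Otimes>\<^sub>M \<mu>) (\<lambda>z. z []) = F \<Otimes>\<^sub>M \<mu>"
    using Fmu by (intro distr_PiM_component) auto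
  also have "distr (F \<Otimes>\<^sub>M \<mu>) borel snd = distr (F \<Otimes>\<^sub>M \<mu>) \<mu> snd"
    by (rule distr_cong) (simp_all add: smu)
  also have "\<dots> = \<mu>"
    using F mu.sigma_finite_measure_axioms by (rule distr_pair_snd')
  finally show ?case by simp
next
  case (Suc n)
  interpret mu: prob_space \<mu> by fact
  have Fmu: "prob_space (F \<Otimes>\<^sub>M \<mu>)" using F mu by (rule prob_space_pair)
  have "distr (PiM UNIV (\<lambda>_::nat list. F \<Otimes>\<^sub>M \<mu>)) borel (Vr (Suc n)) = T_op F (distr (PiM UNIV (\<lambda>_::nat list. F \<Otimes>\<^sub>M \<mu>)) borel (Vr n))"
    by (rule rde_step[OF Fmu F sF measurable_fst mu.distr_pair_fst meas_Vr[OF sF smu]]) simp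
  then show ?case using Suc by (simp del: Vr.simps)
qed

lemma distr_famz:
  assumes F: "prob_space F" and mu: "prob_space \<mu>"
  shows "distr (PiM UNIV (\<lambda>_::nat list. F \<Otimes>\<^sub>M \<mu>)) (PiM UNIV (\<lambda>_::nat list. F)) famz = PiM UNIV (\<lambda>_::nat list. F)"
proof -
  interpret mu: prob_space \<mu> by fact
  have Fmu: "prob_space (F \<Otimes>\<^sub>M \<mu>)" using F mu by (rule prob_space_pair)
  have "distr (PiM UNIV (\<lambda>_::nat list. F \<Otimes>\<^sub>M \<mu>)) (PiM UNIV (\<lambda>_::nat list. F)) (\<lambda>\<omega> i. fst (\<omega> i))
      = PiM UNIV (\<lambda>i::nat list. distr (F \<Otimes>\<^sub>M \<mu>) F fst)"
    using Fmu by (intro distr_PiM_map) auto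
  then show ?thesis by (simp add: famz_def[abs_def] mu.distr_pair_fst)
qed

lemma lawR_famz:
  assumes F: "prob_space F" and sF: "sets F = sets family_space" and mu: "prob_space \<mu>"
  shows "lawR F = distr (PiM UNIV (\<lambda>_::nat list. F \<Otimes>\<^sub>M \<mu>)) borel (\<lambda>z. allmax (famz z))"
proof -
  have "lawR F = distr (distr (PiM UNIV (\<lambda>_::nat list. F \<Otimes>\<^sub>M \<mu>)) (PiM UNIV (\<lambda>_::nat list. F)) famz) borel allmax"
    unfolding lawR_def brw_space_def distr_famz[OF F mu] ..
  also have "\<dots> = distr (PiM UNIV (\<lambda>_::nat list. F \<Otimes>\<^sub>M \<mu>)) borel (allmax \<circ> famz)"
    by (rule distr_distr[OF meas_allmax[OF sF] meas_famz])
  finally show ?thesis by (simp add: comp_def)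
qed



definition ef :: "real \<Rightarrow> family \<Rightarrow> nat \<Rightarrow> ennreal" where
  "ef \<theta> f j = (if enat j < fst f then ennreal (exp (\<theta> * snd f j)) else 0)"

fun Zs :: "real \<Rightarrow> nat \<Rightarrow> (nat list \<Rightarrow> family) \<Rightarrow> ennreal" where
  "Zs \<theta> 0 \<omega> = 1"
| "Zs \<theta> (Suc n) \<omega> = (\<Sum>j. ef \<theta> (\<omega> []) j * Zs \<theta> n (shiftw j \<omega>))"

lemma meas_ef:
  assumes sF: "sets F = sets family_space"
  shows "(\<lambda>f. ef \<theta> f j) \<in> borel_measurable F"
proof -
  have [measurable]: "fst \<in> measurable F (count_space UNIV)" "(\<lambda>f. snd f j) \<in> borel_measurable F"
    using family_meas[OF sF] by auto
  have [measurable]: "Measurable.pred F (\<lambda>f. enat j < fst f)"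
    by (rule measurable_compose[OF family_meas(1)[OF sF] measurable_count_space])
  show ?thesis unfolding ef_def by measurable
qed

lemma meas_Zs:
  assumes sF: "sets F = sets family_space"
  shows "Zs \<theta> n \<in> borel_measurable (PiM UNIV (\<lambda>_::nat list. F))"
proof (induction n)
  case 0 then show ?case by simp
next
  case (Suc n)
  have r: "(\<lambda>\<omega>. \<omega> []) \<in> measurable (PiM UNIV (\<lambda>_::nat list. F)) F"
    by (rule measurable_component_singleton) simp
  have [measurable]: "(\<lambda>\<omega>. ef \<theta> (\<omega> []) j) \<in> borel_measurable (PiM UNIV (\<lambda>_::nat list. F))" for j
    by (rule measurable_compose[OF r meas_ef[OF sF]])
  have [measurable]: "(\<lambda>\<omega>. Zs \<theta> n (shiftw j \<omega>)) \<in> borel_measurable (PiM UNIV (\<lambda>_::nat list. F))" for j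
    by (rule measurable_compose[OF measurable_shiftw Suc])
  show ?case by simp measurable
qed

lemma Zs_bound:
  assumes "alive \<omega> w"
  shows "ennreal (exp (\<theta> * pos \<omega> w)) \<le> Zs \<theta> (length w) \<omega>"
  using assms
proof (induction w arbitrary: \<omega>)
  case Nil then show ?case by simp
next
  case (Cons j v)
  then have j: "enat j < fst (\<omega> [])" and v: "alive (shiftw j \<omega>) v"
    by (auto simp: alive_Cons_shift)
  have "ennreal (exp (\<theta> * pos \<omega> (j # v))) = ennreal (exp (\<theta> * snd (\<omega> []) j)) * ennreal (exp (\<theta> * pos (shiftw j \<omega>) v))"
    by (simp add: pos_Cons_shift distrib_left exp_add ennreal_mult)
  also have "\<dots> \<le> ef \<theta> (\<omega> []) j * Zs \<theta> (length v) (shiftw j \<omega>)"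
    using j Cons.IH[OF v] by (simp add: ef_def mult_left_mono)
  also have "\<dots> \<le> (\<Sum>i. ef \<theta> (\<omega> []) i * Zs \<theta> (length v) (shiftw i \<omega>))"
    using sum_le_suminf[OF summableI, of "{j}" "\<lambda>i. ef \<theta> (\<omega> []) i * Zs \<theta> (length v) (shiftw i \<omega>)"] by simp
  finally show ?case by simp
qed

lemma E_Zs:
  assumes F: "prob_space F" and sF: "sets F = sets family_space"
  shows "(\<integral>\<^sup>+ \<omega>. Zs \<theta> n \<omega> \<partial>PiM UNIV (\<lambda>_::nat list. F)) = (\<integral>\<^sup>+ f. (\<Sum>i. ef \<theta> f i) \<partial>F) ^ n"
proof (induction n)
  case 0
  interpret B: prob_space "PiM UNIV (\<lambda>_::nat list. F)" using F by (rule prob_B)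
  show ?case by (simp add: B.emeasure_space_1)
next
  case (Suc n)
  let ?B = "PiM UNIV (\<lambda>_::nat list. F)"
  let ?PO = "PiM UNIV (\<lambda>_::nat. ?B)"
  let ?m = "\<integral>\<^sup>+ f. (\<Sum>i. ef \<theta> f i) \<partial>F"
  interpret B: prob_space ?B using F by (rule prob_B)
  interpret PO: prob_space ?PO by (rule prob_space_PiM) (rule B.prob_space_axioms)
  have ZsY: "(\<lambda>Y. Zs \<theta> n (Y j)) \<in> borel_measurable ?PO" for j
    by (rule meas_comp_compc[OF meas_Zs[OF sF]]) simp
  have efm: "(\<lambda>f. ef \<theta> f j) \<in> borel_measurable F" for j by (rule meas_ef[OF sF])
  have [measurable]: "(\<lambda>z. ef \<theta> (fst z) j) \<in> borel_measurable (F \<Otimes>\<^sub>M ?PO)" for j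
    by (rule meas_comp_fst[OF efm])
  have [measurable]: "(\<lambda>z. Zs \<theta> n (snd z j)) \<in> borel_measurable (F \<Otimes>\<^sub>M ?PO)" for j
    by (rule meas_comp_snd[OF ZsY])
  have inner: "(\<integral>\<^sup>+ Y. (\<Sum>j. ef \<theta> x j * Zs \<theta> n (Y j)) \<partial>?PO) = (\<Sum>j. ef \<theta> x j) * ?m ^ n" for x
  proof -
    have "(\<integral>\<^sup>+ Y. (\<Sum>j. ef \<theta> x j * Zs \<theta> n (Y j)) \<partial>?PO) = (\<Sum>j. \<integral>\<^sup>+ Y. ef \<theta> x j * Zs \<theta> n (Y j) \<partial>?PO)"
    proof (rule nn_integral_suminf)
      fix j
      note ZsY[measurable]
      show "(\<lambda>Y. ef \<theta> x j * Zs \<theta> n (Y j)) \<in> borel_measurable ?PO" by measurable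
    qed
    also have "\<dots> = (\<Sum>j. ef \<theta> x j * ?m ^ n)"
    proof (rule suminf_cong)
      fix j
      have "(\<integral>\<^sup>+ Y. Zs \<theta> n (Y j) \<partial>?PO) = (\<integral>\<^sup>+ \<omega>. Zs \<theta> n \<omega> \<partial>distr ?PO ?B (\<lambda>Y. Y j))"
        by (rule nn_integral_distr[symmetric]) (simp_all add: meas_Zs[OF sF])
      also have "distr ?PO ?B (\<lambda>Y. Y j) = ?B"
        by (rule distr_PiM_component) (simp_all add: B.prob_space_axioms)
      finally have "(\<integral>\<^sup>+ Y. Zs \<theta> n (Y j) \<partial>?PO) = ?m ^ n" using Suc by simp
      then show "(\<integral>\<^sup>+ Y. ef \<theta> x j * Zs \<theta> n (Y j) \<partial>?PO) = ef \<theta> x j * ?m ^ n"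
        by (simp add: nn_integral_cmult ZsY)
    qed
    also have "\<dots> = (\<Sum>j. ef \<theta> x j) * ?m ^ n" by simp
    finally show ?thesis .
  qed
  have "(\<integral>\<^sup>+ \<omega>. Zs \<theta> (Suc n) \<omega> \<partial>?B) = (\<integral>\<^sup>+ \<omega>. Zs \<theta> (Suc n) \<omega> \<partial>distr (F \<Otimes>\<^sub>M ?PO) ?B joinw)"
    by (simp add: distr_joinw F)
  also have "\<dots> = (\<integral>\<^sup>+ z. Zs \<theta> (Suc n) (joinw z) \<partial>(F \<Otimes>\<^sub>M ?PO))"
    by (rule nn_integral_distr[OF measurable_joinw]) (subst measurable_distr_eq1, rule meas_Zs[OF sF])
  also have "\<dots> = (\<integral>\<^sup>+ z. (\<Sum>j. ef \<theta> (fst z) j * Zs \<theta> n (snd z j)) \<partial>(F \<Otimes>\<^sub>M ?PO))"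
    by (simp del: Zs.simps(1) add: Zs.simps(2))
  also have "\<dots> = (\<integral>\<^sup>+ x. \<integral>\<^sup>+ Y. (\<Sum>j. ef \<theta> x j * Zs \<theta> n (Y j)) \<partial>?PO \<partial>F)"
    by (rule PO.nn_integral_fst[symmetric, where f="\<lambda>z. \<Sum>j. ef \<theta> (fst z) j * Zs \<theta> n (snd z j)", simplified]) measurable
  also have "\<dots> = (\<integral>\<^sup>+ x. (\<Sum>j. ef \<theta> x j) * ?m ^ n \<partial>F)"
    by (simp add: inner)
  also have "\<dots> = ?m * ?m ^ n"
    by (rule nn_integral_multc) (rule borel_measurable_suminf_order[OF efm])
  finally show ?case by simp
qed



lemma ereal_div_nonneg: "0 \<le> (x::ereal) \<Longrightarrow> 0 < (r::real) \<Longrightarrow> 0 \<le> x / ereal r"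
  by simp

lemma ennreal_pow_fin: "(m::ennreal) < \<top> \<Longrightarrow> m ^ n \<noteq> \<top>"
  by (simp add: power_eq_top_ennreal_iff)

lemma pos_bound:
  assumes th: "\<theta> > 0" and Z: "Zs \<theta> (length w) \<omega> \<noteq> \<infinity>" and a: "alive \<omega> w"
  shows "pos \<omega> w \<le> ln (enn2real (Zs \<theta> (length w) \<omega>)) / \<theta>"
proof -
  let ?Z = "Zs \<theta> (length w) \<omega>"
  have le: "ennreal (exp (\<theta> * pos \<omega> w)) \<le> ?Z" by (rule Zs_bound[OF a])
  have "?Z = ennreal (enn2real ?Z)" using Z by (simp add: ennreal_enn2real_if)
  with le have le2: "exp (\<theta> * pos \<omega> w) \<le> enn2real ?Z"
    by (metis enn2real_ennreal enn2real_mono exp_ge_zero Z infinity_ennreal_def less_top)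
  have zp: "0 < enn2real ?Z" using le2 exp_gt_zero less_le_trans by blast
  have "\<theta> * pos \<omega> w = ln (exp (\<theta> * pos \<omega> w))" by simp
  also have "\<dots> \<le> ln (enn2real ?Z)"
    using le2 zp by (subst ln_le_cancel_iff) auto
  finally show ?thesis using th by (simp add: field_simps)
qed

lemma allmax_fin_pointwise:
  assumes th: "\<theta> > 0" and Z: "\<And>n. Zs \<theta> n \<omega> \<noteq> \<infinity>"
    and ev: "\<And>w. alive \<omega> w \<Longrightarrow> n0 \<le> length w \<Longrightarrow> pos \<omega> w \<le> 0"
  shows "allmax \<omega> < \<infinity>"
proof -
  define b where "b k = \<bar>ln (enn2real (Zs \<theta> k \<omega>)) / \<theta>\<bar>" for k
  have "allmax \<omega> \<le> ereal (\<Sum>k<n0. b k)"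
    unfolding allmax_def
  proof (rule SUP_least)
    fix w assume "w \<in> {w. alive \<omega> w}"
    then have a: "alive \<omega> w" by simp
    show "ereal (pos \<omega> w) \<le> ereal (\<Sum>k<n0. b k)"
    proof (cases "n0 \<le> length w")
      case True
      then have "pos \<omega> w \<le> 0" by (rule ev[OF a])
      also have "0 \<le> (\<Sum>k<n0. b k)" by (auto simp: b_def intro!: sum_nonneg)
      finally show ?thesis by simp
    next
      case False
      have "pos \<omega> w \<le> b (length w)"
        unfolding b_def by (rule order.trans[OF pos_bound[OF th Z a] abs_ge_self])
      also have "\<dots> \<le> (\<Sum>k<n0. b k)"
        using False by (intro member_le_sum) (auto simp: b_def)
      finally show ?thesis by simp
    qed
  qed
  then show ?thesis by (auto simp: le_less_trans)
qed

lemma ev_from_extinct: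
  assumes "\<not> nonextinct \<omega>"
  shows "\<exists>n0. \<forall>w. alive \<omega> w \<longrightarrow> n0 \<le> length w \<longrightarrow> pos \<omega> w \<le> 0"
proof -
  obtain n where n: "\<not> (\<exists>w. alive \<omega> w \<and> length w = n)" using assms by (auto simp: nonextinct_def)
  have "\<not> (alive \<omega> w \<and> n \<le> length w)" for w
  proof
    assume "alive \<omega> w \<and> n \<le> length w"
    then have "alive \<omega> (take n w)" "length (take n w) = n" by (auto intro: alive_take)
    then show False using n by blast
  qed
  then show ?thesis by blast
qed

lemma ev_from_conv:
  assumes g: "\<gamma> < 0" and conv: "(\<lambda>n. rightmost \<omega> n / ereal (real n)) \<longlonglongrightarrow> ereal \<gamma>"
  shows "\<exists>n0. \<forall>w. alive \<omega> w \<longrightarrow> n0 \<le> length w \<longrightarrow> pos \<omega> w \<le> 0"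
proof -
  have "eventually (\<lambda>n. rightmost \<omega> n / ereal (real n) < 0) sequentially"
    using order_tendstoD(2)[OF conv] g by simp
  then obtain n1 where n1: "\<And>n. n \<ge> n1 \<Longrightarrow> rightmost \<omega> n / ereal (real n) < 0"
    by (auto simp: eventually_sequentially)
  have "pos \<omega> w \<le> 0" if a: "alive \<omega> w" and l: "max n1 1 \<le> length w" for w
  proof (rule ccontr)
    assume "\<not> pos \<omega> w \<le> 0"
    then have p: "0 \<le> ereal (pos \<omega> w)" by simp
    have "ereal (pos \<omega> w) \<le> rightmost \<omega> (length w)"
      unfolding rightmost_def using a by (intro SUP_upper) auto
    with p have "0 \<le> rightmost \<omega> (length w)" by (rule order.trans)
    then have "0 \<le> rightmost \<omega> (length w) / ereal (real (length w))"
      using l by (intro ereal_div_nonneg) auto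
    with n1[of "length w"] l show False by simp
  qed
  then show ?thesis by blast
qed

lemma brw_lawD:
  assumes "brw_law F"
  shows "prob_space F" "sets F = sets family_space"
    "\<exists>\<theta>>0. (\<integral>\<^sup>+ f. (\<Sum>i. ef \<theta> f i) \<partial>F) < \<infinity>"
  using assms by (auto simp: brw_law_def ef_def)

lemma allmax_finite_AE:
  assumes law: "brw_law F"
    and hyp: "AE \<omega> in brw_space F. (\<exists>n0. \<forall>w. alive \<omega> w \<longrightarrow> n0 \<le> length w \<longrightarrow> pos \<omega> w \<le> 0)"
  shows "AE \<omega> in brw_space F. 0 \<le> allmax \<omega> \<and> allmax \<omega> < \<infinity>"
proof -
  note F = brw_lawD(1,2)[OF law]
  obtain \<theta> where th: "\<theta> > 0" and m: "(\<integral>\<^sup>+ f. (\<Sum>i. ef \<theta> f i) \<partial>F) < \<infinity>"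
    using brw_lawD(3)[OF law] by blast
  have mt: "(\<integral>\<^sup>+ f. (\<Sum>i. ef \<theta> f i) \<partial>F) \<noteq> \<top>" using m by auto
  have "AE \<omega> in brw_space F. Zs \<theta> n \<omega> \<noteq> \<infinity>" for n
    unfolding brw_space_def
    by (rule nn_integral_noteq_infinite[OF meas_Zs[OF F(2)]]) (simp add: E_Zs[OF F] mt power_eq_top_ennreal_iff)
  then have "AE \<omega> in brw_space F. \<forall>n. Zs \<theta> n \<omega> \<noteq> \<infinity>"
    by (simp add: AE_all_countable)
  with hyp show ?thesis
  proof eventually_elim
    case (elim \<omega>)
    then obtain n0 where "\<forall>w. alive \<omega> w \<longrightarrow> n0 \<le> length w \<longrightarrow> pos \<omega> w \<le> 0" by blast
    then have "allmax \<omega> < \<infinity>" using allmax_fin_pointwise[OF th] elim by blast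
    then show ?case by (simp add: allmax_nonneg)
  qed
qed



lemma ae_eq_of_le_same_law:
  fixes X Y :: "'a \<Rightarrow> ereal"
  assumes M: "prob_space M"
    and Xm: "X \<in> borel_measurable M" and Ym: "Y \<in> borel_measurable M"
    and le: "AE \<omega> in M. Y \<omega> \<le> X \<omega>"
    and fin: "AE \<omega> in M. 0 \<le> Y \<omega> \<and> Y \<omega> < \<infinity>"
    and law: "distr M borel X = distr M borel Y"
  shows "AE \<omega> in M. X \<omega> = Y \<omega>"
proof -
  interpret prob_space M by fact
  have q: "AE \<omega> in M. \<not> (Y \<omega> \<le> ereal (of_rat q) \<and> ereal (of_rat q) < X \<omega>)" for q :: rat
  proof -
    define A where "A = {\<omega> \<in> space M. Y \<omega> \<le> ereal (of_rat q)}"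
    define B where "B = {\<omega> \<in> space M. X \<omega> \<le> ereal (of_rat q)}"
    have A: "A \<in> sets M" unfolding A_def using Ym by measurable
    have B: "B \<in> sets M" unfolding B_def using Xm by measurable
    have "measure M B = measure (distr M borel X) {..ereal (of_rat q)}"
      using Xm by (subst measure_distr) (auto simp: B_def vimage_def Int_def conj_commute)
    also have "\<dots> = measure (distr M borel Y) {..ereal (of_rat q)}" by (simp add: law)
    also have "\<dots> = measure M A"
      using Ym by (subst measure_distr) (auto simp: A_def vimage_def Int_def conj_commute)
    finally have AB: "measure M B = measure M A" .
    have "AE x in M. (x \<in> A \<inter> B) = (x \<in> B)"
      using le by eventually_elim (auto simp: A_def B_def intro: order.trans)
    then have "measure M (A \<inter> B) = measure M B"
      by (rule measure_eq_AE) (use A B in auto)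
    then have "measure M (A - (A \<inter> B)) = 0"
      using A B AB by (subst finite_measure_Diff) auto
    then have "A - B \<in> null_sets M"
      using A B by (auto simp: Diff_Int emeasure_eq_measure null_sets_def)
    then have "AE \<omega> in M. \<omega> \<notin> A - B" by (rule AE_not_in)
    with AE_space show ?thesis by eventually_elim (auto simp: A_def B_def)
  qed
  then have "AE \<omega> in M. \<forall>q::rat. \<not> (Y \<omega> \<le> ereal (of_rat q) \<and> ereal (of_rat q) < X \<omega>)"
    by (simp add: AE_all_countable)
  with le fin show ?thesis
  proof eventually_elim
    case (elim \<omega>)
    obtain y where y: "Y \<omega> = ereal y" using elim by (cases "Y \<omega>") auto
    show "X \<omega> = Y \<omega>"
    proof (rule ccontr)
      assume "X \<omega> \<noteq> Y \<omega>"
      with elim have lt: "ereal y < X \<omega>" using y by auto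
      obtain r :: rat where r: "y < of_rat r" "ereal (of_rat r) < X \<omega>"
      proof (cases "X \<omega>")
        case (real x)
        with lt have "y < x" by simp
        then obtain r :: rat where "y < of_rat r" "of_rat r < x" using of_rat_dense by blast
        then show ?thesis using that real by auto
      next
        case PInf
        obtain r :: rat where "y < of_rat r" "of_rat r < y + 1" using of_rat_dense[of y "y + 1"] by auto
        then show ?thesis using that PInf by auto
      next
        case MInf then show ?thesis using lt by simp
      qed
      then show False using elim y by (metis ereal_less_eq(3) less_imp_le)
    qed
  qed
qed

lemma endog:
  assumes law: "brw_law F"
    and fin: "AE \<omega> in brw_space F. 0 \<le> allmax \<omega> \<and> allmax \<omega> < \<infinity>"
    and rtp: "inv_RTP F M data X (lawR F)"
  shows "endogenous F M data X"
proof -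
  note F = brw_lawD(1,2)[OF law]
  let ?B = "PiM UNIV (\<lambda>_::nat list. F)"
  note R = rtp[unfolded inv_RTP_def]
  interpret M: prob_space M using R[THEN conjunct1] .
  have ind: "M.indep_vars (\<lambda>_. F) data UNIV" using R[THEN conjunct2, THEN conjunct1] .
  have marg: "\<And>w. distr M F (data w) = F" using R[THEN conjunct2, THEN conjunct2, THEN conjunct1] by blast
  have Xall: "\<forall>w. X w \<in> borel_measurable M \<and> distr M borel (X w) = lawR F"
    using R[THEN conjunct2, THEN conjunct2, THEN conjunct2, THEN conjunct1] .
  have Xm: "\<And>w. X w \<in> borel_measurable M" and Xl: "\<And>w. distr M borel (X w) = lawR F"
    using Xall by blast+
  have rec: "\<And>w. AE \<omega> in M. X w \<omega> = rde_map (data w \<omega>) (\<lambda>j. X (w @ [j]) \<omega>)"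
    using R[THEN conjunct2, THEN conjunct2, THEN conjunct2, THEN conjunct2, THEN conjunct1] by blast
  have rv: "\<And>w. data w \<in> measurable M F"
    using ind[unfolded M.indep_vars_def, THEN conjunct1] by blast
  define D where "D \<omega> = (\<lambda>w. data w \<omega>)" for \<omega>
  have Dm: "D \<in> measurable M ?B"
    unfolding D_def by (rule measurable_PiM_single') (auto simp: rv space_PiM measurable_space[OF rv])
  have "distr M ?B (\<lambda>x. \<lambda>i\<in>UNIV. data i x) = PiM UNIV (\<lambda>i. distr M F (data i))"
    by (rule iffD1[OF M.indep_vars_iff_distr_eq_PiM[where I=UNIV and M'="\<lambda>_. F" and X=data] ind]) (simp_all add: rv)
  then have DD: "distr M ?B D = ?B" by (simp add: D_def[abs_def] marg restrict_UNIV)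
  have allmaxD: "(\<lambda>\<omega>. allmax (D \<omega>)) \<in> borel_measurable M"
    by (rule measurable_compose[OF Dm meas_allmax[OF F(2)]])
  have finD: "AE \<omega> in M. 0 \<le> allmax (D \<omega>) \<and> allmax (D \<omega>) < \<infinity>"
  proof (rule AE_distrD[OF Dm])
    have "AE \<omega> in ?B. 0 \<le> allmax \<omega> \<and> allmax \<omega> < \<infinity>" using fin unfolding brw_space_def .
    then show "AE \<omega> in distr M ?B D. 0 \<le> allmax \<omega> \<and> allmax \<omega> < \<infinity>" by (subst DD)
  qed
  have nn: "AE \<omega> in M. 0 \<le> X w \<omega>" for w
  proof -
    have "AE y in distr ?B borel allmax. 0 \<le> y"
      by (subst AE_distr_iff) (rule meas_allmax[OF F(2)], simp, rule AE_I2, rule allmax_nonneg)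
    then have "AE y in lawR F. 0 \<le> y" unfolding lawR_def brw_space_def .
    then have "AE y in distr M borel (X w). 0 \<le> y" by (subst Xl)
    then show ?thesis by (rule AE_distrD[OF Xm])
  qed
  have "AE \<omega> in M. (\<forall>w. X w \<omega> = rde_map (data w \<omega>) (\<lambda>j. X (w @ [j]) \<omega>)) \<and> (\<forall>w. 0 \<le> X w \<omega>)"
    using rec nn by (simp add: AE_all_countable)
  then have le: "AE \<omega> in M. allmax (D \<omega>) \<le> X [] \<omega>"
  proof eventually_elim
    case (elim \<omega>)
    then show ?case unfolding D_def by (intro endog_pointwise) blast+
  qed
  have "distr M borel (\<lambda>\<omega>. allmax (D \<omega>)) = distr (distr M ?B D) borel allmax"
    by (subst distr_distr[OF meas_allmax[OF F(2)] Dm]) (simp add: comp_def)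
  also have "\<dots> = lawR F" by (simp add: DD lawR_def brw_space_def)
  finally have lawD: "distr M borel (\<lambda>\<omega>. allmax (D \<omega>)) = lawR F" .
  have "AE \<omega> in M. X [] \<omega> = allmax (D \<omega>)"
    by (rule ae_eq_of_le_same_law[OF M.prob_space_axioms Xm allmaxD le finD]) (simp add: Xl lawD)
  then show ?thesis
    unfolding endogenous_def D_def using meas_allmax[OF F(2)] by blast
qed



lemma sol_props:
  assumes "rde_solution F \<mu>"
  shows "prob_space \<mu>" "sets \<mu> = sets (borel::ereal measure)" "T_op F \<mu> = \<mu>" "AE y in \<mu>. 0 \<le> y"
proof -
  show p: "prob_space \<mu>" and s: "sets \<mu> = sets (borel::ereal measure)" and "T_op F \<mu> = \<mu>"
    using assms by (auto simp: rde_solution_def)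
  interpret prob_space \<mu> by (rule p)
  have e: "emeasure \<mu> {0..<\<infinity>} = 1" using assms by (simp add: rde_solution_def)
  have "{0..<\<infinity>::ereal} \<in> sets \<mu>" using s by simp
  then have "prob {0..<\<infinity>} = 1" using e by (simp add: emeasure_eq_measure)
  then have "AE y in \<mu>. y \<in> {0..<\<infinity>}" by (rule AE_prob_1)
  then show "AE y in \<mu>. 0 \<le> y" by eventually_elim auto
qed

lemma Tpow_fix:
  assumes "T_op F \<mu> = \<mu>"
  shows "(T_op F ^^ n) \<mu> = \<mu>"
  by (induction n) (simp_all add: assms)

lemma AE_vals_nonneg:
  assumes F: "prob_space F" and mu: "prob_space \<mu>" and nn: "AE y in \<mu>. 0 \<le> y"
  shows "AE z in PiM UNIV (\<lambda>_::nat list. F \<Otimes>\<^sub>M \<mu>). \<forall>w. 0 \<le> snd (z w)"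
proof -
  interpret mu: prob_space \<mu> by fact
  have Fmu: "prob_space (F \<Otimes>\<^sub>M \<mu>)" using F mu by (rule prob_space_pair)
  have "AE y in distr (F \<Otimes>\<^sub>M \<mu>) \<mu> snd. 0 \<le> y"
    by (subst distr_pair_snd'[OF F mu.sigma_finite_measure_axioms]) (rule nn)
  then have A: "AE p in F \<Otimes>\<^sub>M \<mu>. 0 \<le> snd p" by (rule AE_distrD[OF measurable_snd])
  have "AE z in PiM UNIV (\<lambda>_::nat list. F \<Otimes>\<^sub>M \<mu>). 0 \<le> snd (z w)" for w
    by (rule AE_PiM_component[where M="\<lambda>_. F \<Otimes>\<^sub>M \<mu>" and I=UNIV and i=w and P="\<lambda>p. 0 \<le> snd p", OF _ _ A])
      (simp_all add: Fmu)
  then show ?thesis by (simp add: AE_all_countable)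
qed

lemma meas_genne_famz:
  assumes sF: "sets F = sets family_space"
  shows "{z \<in> space (PiM UNIV (\<lambda>_::nat list. F \<Otimes>\<^sub>M \<mu>)). \<exists>w. alive (famz z) w \<and> length w = n}
     \<in> sets (PiM UNIV (\<lambda>_::nat list. F \<Otimes>\<^sub>M \<mu>))"
proof -
  have "Measurable.pred (PiM UNIV (\<lambda>_::nat list. F \<Otimes>\<^sub>M \<mu>)) (\<lambda>z. \<exists>w. alive (famz z) w \<and> length w = n)"
    by (rule pred_sets1[OF meas_genne[OF sF] meas_famz])
  then show ?thesis by (simp add: pred_def)
qed

lemma unique_ext:
  assumes law: "brw_law F" and ext: "AE \<omega> in brw_space F. \<not> nonextinct \<omega>"
    and sol: "rde_solution F \<mu>"
  shows "\<mu> = lawR F"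
proof -
  note F = brw_lawD(1,2)[OF law]
  note mu = sol_props[OF sol]
  let ?O = "PiM UNIV (\<lambda>_::nat list. F \<Otimes>\<^sub>M \<mu>)"
  let ?B = "PiM UNIV (\<lambda>_::nat list. F)"
  interpret mu: prob_space \<mu> by (rule mu(1))
  have Fmu: "prob_space (F \<Otimes>\<^sub>M \<mu>)" using F(1) mu(1) by (rule prob_space_pair)
  interpret O: prob_space ?O using Fmu by (auto intro!: prob_space_PiM)
  have muV: "\<mu> = distr ?O borel (Vr n)" for n
    using T_pow_mu[OF F mu(1,2), of n] Tpow_fix[OF mu(3), of n] by simp
  have lawZ: "lawR F = distr ?O borel (\<lambda>z. allmax (famz z))"
    by (rule lawR_famz[OF F mu(1)])
  have allmaxZ: "(\<lambda>z. allmax (famz z)) \<in> borel_measurable ?O"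
    by (rule measurable_compose[OF meas_famz meas_allmax[OF F(2)]])
  define E where "E n = {z \<in> space ?O. \<exists>w. alive (famz z) w \<and> length w = n}" for n
  have Es: "E n \<in> sets ?O" for n unfolding E_def by (rule meas_genne_famz[OF F(2)])
  have Edec: "decseq E"
  proof (rule decseq_SucI)
    fix n show "E (Suc n) \<subseteq> E n"
    proof
      fix z assume "z \<in> E (Suc n)"
      then obtain w where "z \<in> space ?O" "alive (famz z) w" "length w = Suc n" by (auto simp: E_def)
      then show "z \<in> E n" unfolding E_def
        by (auto intro!: exI[of _ "take n w"] alive_take)
    qed
  qed
  have AEext: "AE z in ?O. \<not> nonextinct (famz z)"
  proof (rule AE_distrD[OF meas_famz])
    show "AE \<omega> in distr ?O ?B famz. \<not> nonextinct \<omega>"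
      by (subst distr_famz[OF F(1) mu(1)]) (use ext in \<open>unfold brw_space_def\<close>)
  qed
  have "measure ?O (\<Inter>n. E n) \<le> measure ?O {}"
  proof (rule O.finite_measure_mono_AE)
    show "AE x in ?O. x \<in> (\<Inter>n. E n) \<longrightarrow> x \<in> {}"
      using AEext by eventually_elim (auto simp: E_def nonextinct_def)
  qed simp
  then have E0: "measure ?O (\<Inter>n. E n) = 0" by (simp add: measure_nonneg antisym)
  have Elim: "(\<lambda>n. measure ?O (E n)) \<longlonglongrightarrow> 0"
    using O.finite_Lim_measure_decseq[of E] Es Edec E0 by auto
  show ?thesis
  proof (rule measure_eqI)
    show "sets \<mu> = sets (lawR F)" using mu(2) by (simp add: lawR_def)
    fix A assume A: "A \<in> sets \<mu>"
    then have Ab: "A \<in> sets (borel::ereal measure)" using mu(2) by simp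
    define S2 where "S2 = (\<lambda>z. allmax (famz z)) -` A \<inter> space ?O"
    have S2s: "S2 \<in> sets ?O" unfolding S2_def using allmaxZ Ab by (rule measurable_sets)
    have mL: "measure (lawR F) A = measure ?O S2"
      unfolding lawZ S2_def by (rule measure_distr[OF allmaxZ Ab])
    have diff: "\<bar>measure \<mu> A - measure (lawR F) A\<bar> \<le> measure ?O (E n)" for n
    proof -
      define S1 where "S1 = Vr n -` A \<inter> space ?O"
      have Vm: "Vr n \<in> borel_measurable ?O" by (rule meas_Vr[OF F(2) mu(2)])
      have S1s: "S1 \<in> sets ?O" unfolding S1_def using Vm Ab by (rule measurable_sets)
      have mM: "measure \<mu> A = measure ?O S1"
        unfolding S1_def by (subst muV[of n]) (rule measure_distr[OF Vm Ab])
      have eqout: "Vr n z = allmax (famz z)" if "z \<in> space ?O" "z \<notin> E n" for z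
        using that by (simp add: E_def Vr_genempty genempty_allmax)
      have sub1: "S1 \<subseteq> S2 \<union> E n" and sub2: "S2 \<subseteq> S1 \<union> E n"
        using eqout by (auto simp: S1_def S2_def)
      have "measure ?O S1 \<le> measure ?O (S2 \<union> E n)"
        using sub1 S2s Es by (intro O.finite_measure_mono) auto
      also have "\<dots> \<le> measure ?O S2 + measure ?O (E n)" using S2s Es by (rule measure_Un_le)
      finally have 1: "measure ?O S1 \<le> measure ?O S2 + measure ?O (E n)" .
      have "measure ?O S2 \<le> measure ?O (S1 \<union> E n)"
        using sub2 S1s Es by (intro O.finite_measure_mono) auto
      also have "\<dots> \<le> measure ?O S1 + measure ?O (E n)" using S1s Es by (rule measure_Un_le)
      finally have 2: "measure ?O S2 \<le> measure ?O S1 + measure ?O (E n)" .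
      show ?thesis using 1 2 mM mL by linarith
    qed
    have "\<bar>measure \<mu> A - measure (lawR F) A\<bar> \<le> 0"
      using Elim by (rule LIMSEQ_le_const) (use diff in auto)
    then have eqm: "measure \<mu> A = measure (lawR F) A" by simp
    interpret L: prob_space "lawR F"
      unfolding lawR_def brw_space_def using prob_B[OF F(1)]
      by (intro prob_space.prob_space_distr meas_allmax[OF F(2)])
    from eqm show "emeasure \<mu> A = emeasure (lawR F) A"
      by (simp add: mu.emeasure_eq_measure L.emeasure_eq_measure)
  qed
qed



lemma lawR_le_sol:
  assumes law: "brw_law F" and sol: "rde_solution F \<mu>"
  shows "stoch_le (lawR F) \<mu>"
  unfolding stoch_le_def
proof
  fix x :: ereal
  note F = brw_lawD(1,2)[OF law]
  note mu = sol_props[OF sol]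
  let ?O = "PiM UNIV (\<lambda>_::nat list. F \<Otimes>\<^sub>M \<mu>)"
  interpret mu: prob_space \<mu> by (rule mu(1))
  have Fmu: "prob_space (F \<Otimes>\<^sub>M \<mu>)" using F(1) mu(1) by (rule prob_space_pair)
  interpret O: prob_space ?O using Fmu by (auto intro!: prob_space_PiM)
  have muV: "\<mu> = distr ?O borel (Vr n)" for n
    using T_pow_mu[OF F mu(1,2), of n] Tpow_fix[OF mu(3), of n] by simp
  have allmaxZ: "(\<lambda>z. allmax (famz z)) \<in> borel_measurable ?O"
    by (rule measurable_compose[OF meas_famz meas_allmax[OF F(2)]])
  have AmZ: "(\<lambda>z. Am n (famz z)) \<in> borel_measurable ?O" for n
    by (rule measurable_compose[OF meas_famz meas_Am[OF F(2)]])
  have xb: "{x<..} \<in> sets (borel::ereal measure)" by simp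
  define G where "G n = (\<lambda>z. Am n (famz z)) -` {x<..} \<inter> space ?O" for n
  have Gs: "G n \<in> sets ?O" for n unfolding G_def using AmZ xb by (rule measurable_sets)
  have Ginc: "incseq G"
    unfolding G_def incseq_def using Am_incseq
    by (auto simp: incseq_def) (meson less_le_trans)
  have GU: "(\<Union>n. G n) = (\<lambda>z. allmax (famz z)) -` {x<..} \<inter> space ?O"
    by (auto simp: G_def allmax_SUP_Am less_SUP_iff)
  have "measure (lawR F) {x<..} = measure ?O ((\<lambda>z. allmax (famz z)) -` {x<..} \<inter> space ?O)"
    unfolding lawR_famz[OF F mu(1)] by (rule measure_distr[OF allmaxZ xb])
  also have "\<dots> = measure ?O (\<Union>n. G n)" by (simp add: GU)
  finally have L: "measure (lawR F) {x<..} = measure ?O (\<Union>n. G n)" .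
  have lim: "(\<lambda>n. measure ?O (G n)) \<longlonglongrightarrow> measure ?O (\<Union>n. G n)"
    using O.finite_Lim_measure_incseq[of G] Gs Ginc by auto
  have nnz: "AE z in ?O. \<forall>w. 0 \<le> snd (z w)" by (rule AE_vals_nonneg[OF F(1) mu(1,4)])
  have le: "measure ?O (G n) \<le> measure \<mu> {x<..}" for n
  proof -
    have Vm: "Vr n \<in> borel_measurable ?O" by (rule meas_Vr[OF F(2) mu(2)])
    have "measure ?O (G n) \<le> measure ?O (Vr n -` {x<..} \<inter> space ?O)"
    proof (rule O.finite_measure_mono_AE)
      show "AE z in ?O. z \<in> G n \<longrightarrow> z \<in> Vr n -` {x<..} \<inter> space ?O"
        using nnz by eventually_elim (auto simp: G_def dest: Am_le_Vr[where n=n] intro: less_le_trans)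
      show "Vr n -` {x<..} \<inter> space ?O \<in> sets ?O" using Vm xb by (rule measurable_sets)
    qed
    also have "\<dots> = measure \<mu> {x<..}"
      by (subst muV[of n]) (rule measure_distr[OF Vm xb, symmetric])
    finally show ?thesis .
  qed
  have "measure ?O (\<Union>n. G n) \<le> measure \<mu> {x<..}"
    using lim by (rule LIMSEQ_le_const2) (use le in auto)
  then show "measure (lawR F) {x<..} \<le> measure \<mu> {x<..}" using L by simp
qed

lemma weak_conv_delta:
  assumes law: "brw_law F" and fin: "AE \<omega> in brw_space F. 0 \<le> allmax \<omega> \<and> allmax \<omega> < \<infinity>"
  shows "weak_conv_m (\<lambda>n. distr ((T_op F ^^ n) (return borel 0)) borel real_of_ereal)
                     (distr (lawR F) borel real_of_ereal)"
  unfolding weak_conv_m_def weak_conv_def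
proof (intro allI impI)
  fix x :: real
  note F = brw_lawD(1,2)[OF law]
  let ?B = "PiM UNIV (\<lambda>_::nat list. F)"
  interpret B: prob_space ?B using F(1) by (rule prob_B)
  have fin': "AE \<omega> in ?B. 0 \<le> allmax \<omega> \<and> allmax \<omega> < \<infinity>" using fin unfolding brw_space_def .
  have rm: "real_of_ereal \<in> borel_measurable (borel::ereal measure)"
    using borel_measurable_real_of_ereal[of "\<lambda>x. x" borel] by simp
  have xb: "{..x} \<in> sets (borel::real measure)" by simp
  have xb': "{..ereal x} \<in> sets (borel::ereal measure)" by simp
  have cdfA: "cdf (distr (distr ?B borel f) borel real_of_ereal) x = measure ?B (f -` {..ereal x} \<inter> space ?B)"
    if fm: "f \<in> borel_measurable ?B" and ff: "AE \<omega> in ?B. 0 \<le> f \<omega> \<and> f \<omega> < \<infinity>" for f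
  proof -
    have "cdf (distr (distr ?B borel f) borel real_of_ereal) x = measure (distr ?B borel (real_of_ereal \<circ> f)) {..x}"
      unfolding cdf_def by (subst distr_distr[OF rm fm]) simp
    also have "\<dots> = measure ?B ((real_of_ereal \<circ> f) -` {..x} \<inter> space ?B)"
      by (rule measure_distr[OF measurable_comp[OF fm rm] xb])
    also have "\<dots> = measure ?B (f -` {..ereal x} \<inter> space ?B)"
    proof (rule measure_eq_AE)
      show "AE z in ?B. (z \<in> (real_of_ereal \<circ> f) -` {..x} \<inter> space ?B) = (z \<in> f -` {..ereal x} \<inter> space ?B)"
        using ff
      proof eventually_elim
        case (elim z)
        then obtain r where "f z = ereal r" by (cases "f z") auto
        then show ?case by auto
      qed
      show "(real_of_ereal \<circ> f) -` {..x} \<inter> space ?B \<in> sets ?B"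
        by (rule measurable_sets[OF measurable_comp[OF fm rm] xb])
      show "f -` {..ereal x} \<inter> space ?B \<in> sets ?B"
        by (rule measurable_sets[OF fm xb'])
    qed
    finally show ?thesis .
  qed
  have ffA: "AE \<omega> in ?B. 0 \<le> Am n \<omega> \<and> Am n \<omega> < \<infinity>" for n
    using fin' by eventually_elim (metis Am_nonneg Am_le_allmax le_less_trans)
  define H where "H n = Am n -` {..ereal x} \<inter> space ?B" for n
  have Hs: "H n \<in> sets ?B" for n unfolding H_def by (rule measurable_sets[OF meas_Am[OF F(2)] xb'])
  have Hdec: "decseq H"
    unfolding H_def decseq_def using Am_incseq
    by (auto simp: incseq_def) (meson order.trans)
  have HI: "(\<Inter>n. H n) = allmax -` {..ereal x} \<inter> space ?B"
    by (auto simp: H_def allmax_SUP_Am SUP_le_iff)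
  have lim: "(\<lambda>n. measure ?B (H n)) \<longlonglongrightarrow> measure ?B (\<Inter>n. H n)"
    using B.finite_Lim_measure_decseq[of H] Hs Hdec by auto
  have "cdf (distr ((T_op F ^^ n) (return borel 0)) borel real_of_ereal) x = measure ?B (H n)" for n
    unfolding T_pow_delta[OF F] H_def by (rule cdfA[OF meas_Am[OF F(2)] ffA])
  moreover have "cdf (distr (lawR F) borel real_of_ereal) x = measure ?B (\<Inter>n. H n)"
    unfolding lawR_def brw_space_def HI by (rule cdfA[OF meas_allmax[OF F(2)] fin'])
  ultimately show "(\<lambda>n. cdf (distr ((T_op F ^^ n) (return borel 0)) borel real_of_ereal) x)
      \<longlonglongrightarrow> cdf (distr (lawR F) borel real_of_ereal) x"
    using lim by simp
qed



theorem lemma24: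
  fixes F :: "family measure"
  assumes law: "brw_law F"
    and cases: "(AE \<omega> in brw_space F. \<not> nonextinct \<omega>)
      \<or> ((\<integral>\<^sup>+ f. ennreal_of_enat (fst f) \<partial>F) > 1 \<and>
         (\<exists>\<gamma>::real. \<gamma> < 0 \<and> (AE \<omega> in brw_space F. nonextinct \<omega> \<longrightarrow>
             (\<lambda>n. rightmost \<omega> n / ereal (real n)) \<longlonglongrightarrow> ereal \<gamma>)))"
  shows "(AE \<omega> in brw_space F. 0 \<le> allmax \<omega> \<and> allmax \<omega> < \<infinity>)
    \<and> rde_solution F (lawR F)
    \<and> ((AE \<omega> in brw_space F. \<not> nonextinct \<omega>) \<longrightarrow>
         (\<forall>\<mu>. rde_solution F \<mu> \<longrightarrow> \<mu> = lawR F)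
         \<and> (\<forall>(M::'o measure) data X. inv_RTP F M data X (lawR F) \<longrightarrow> endogenous F M data X))
    \<and> (((\<integral>\<^sup>+ f. ennreal_of_enat (fst f) \<partial>F) > 1 \<and>
         (\<exists>\<gamma>::real. \<gamma> < 0 \<and> (AE \<omega> in brw_space F. nonextinct \<omega> \<longrightarrow>
             (\<lambda>n. rightmost \<omega> n / ereal (real n)) \<longlonglongrightarrow> ereal \<gamma>))) \<longrightarrow>
         weak_conv_m (\<lambda>n. distr ((T_op F ^^ n) (return borel 0)) borel real_of_ereal)
                     (distr (lawR F) borel real_of_ereal)
         \<and> (\<forall>\<mu>. rde_solution F \<mu> \<longrightarrow> stoch_le (lawR F) \<mu>)
         \<and> (\<forall>(M::'o measure) data X. inv_RTP F M data X (lawR F) \<longrightarrow> endogenous F M data X))"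
proof -
  note F = brw_lawD(1,2)[OF law]
  let ?B = "PiM UNIV (\<lambda>_::nat list. F)"
  interpret B: prob_space ?B using F(1) by (rule prob_B)
  have hyp: "AE \<omega> in brw_space F. (\<exists>n0. \<forall>w. alive \<omega> w \<longrightarrow> n0 \<le> length w \<longrightarrow> pos \<omega> w \<le> 0)"
    using cases
  proof
    assume "AE \<omega> in brw_space F. \<not> nonextinct \<omega>"
    then show ?thesis by eventually_elim (rule ev_from_extinct)
  next
    assume "(\<integral>\<^sup>+ f. ennreal_of_enat (fst f) \<partial>F) > 1 \<and>
         (\<exists>\<gamma>::real. \<gamma> < 0 \<and> (AE \<omega> in brw_space F. nonextinct \<omega> \<longrightarrow>
             (\<lambda>n. rightmost \<omega> n / ereal (real n)) \<longlonglongrightarrow> ereal \<gamma>))"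
    then obtain \<gamma> :: real where g: "\<gamma> < 0" and ae: "AE \<omega> in brw_space F. nonextinct \<omega> \<longrightarrow>
             (\<lambda>n. rightmost \<omega> n / ereal (real n)) \<longlonglongrightarrow> ereal \<gamma>" by blast
    from ae show ?thesis
    proof eventually_elim
      case (elim \<omega>)
      show ?case
      proof (cases "nonextinct \<omega>")
        case True then show ?thesis using elim ev_from_conv[OF g] by blast
      next
        case False then show ?thesis by (rule ev_from_extinct)
      qed
    qed
  qed
  have fin: "AE \<omega> in brw_space F. 0 \<le> allmax \<omega> \<and> allmax \<omega> < \<infinity>"
    by (rule allmax_finite_AE[OF law hyp])
  have sol: "rde_solution F (lawR F)"
    unfolding rde_solution_def
  proof (intro conjI)
    show "prob_space (lawR F)"
      unfolding lawR_def brw_space_def by (rule B.prob_space_distr[OF meas_allmax[OF F(2)]])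
    show "sets (lawR F) = sets borel" by (simp add: lawR_def)
    show "T_op F (lawR F) = lawR F" by (rule lawR_fixed[OF F])
    have fin': "AE \<omega> in ?B. 0 \<le> allmax \<omega> \<and> allmax \<omega> < \<infinity>" using fin unfolding brw_space_def .
    have "emeasure (distr ?B borel allmax) {0..<\<infinity>} = emeasure ?B (allmax -` {0..<\<infinity>} \<inter> space ?B)"
      by (rule emeasure_distr[OF meas_allmax[OF F(2)]]) simp
    also have "\<dots> = 1"
    proof (rule B.emeasure_eq_1_AE)
      show "allmax -` {0..<\<infinity>} \<inter> space ?B \<in> sets ?B"
        by (rule measurable_sets[OF meas_allmax[OF F(2)]]) simp
      show "AE x in ?B. x \<in> allmax -` {0..<\<infinity>} \<inter> space ?B"
        using fin' AE_space by eventually_elim auto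
    qed
    finally show "emeasure (lawR F) {0..<\<infinity>} = 1" unfolding lawR_def brw_space_def .
  qed
  show ?thesis
  proof (intro conjI impI allI)
    show "AE \<omega> in brw_space F. 0 \<le> allmax \<omega> \<and> allmax \<omega> < \<infinity>" by (rule fin)
    show "rde_solution F (lawR F)" by (rule sol)
    fix \<mu> assume "AE \<omega> in brw_space F. \<not> nonextinct \<omega>" "rde_solution F \<mu>"
    then show "\<mu> = lawR F" by (intro unique_ext[OF law])
  next
    fix M :: "'o measure" and data X
    assume "inv_RTP F M data X (lawR F)"
    then show "endogenous F M data X" by (rule endog[OF law fin])
  next
    show "weak_conv_m (\<lambda>n. distr ((T_op F ^^ n) (return borel 0)) borel real_of_ereal)
                     (distr (lawR F) borel real_of_ereal)"
      by (rule weak_conv_delta[OF law fin])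
  next
    fix \<mu> assume "rde_solution F \<mu>"
    then show "stoch_le (lawR F) \<mu>" by (rule lawR_le_sol[OF law])
  next
    fix M :: "'o measure" and data X
    assume "inv_RTP F M data X (lawR F)"
    then show "endogenous F M data X" by (rule endog[OF law fin])
  qed
qed


end
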